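(* Let $\eta,\rho\in\{1,2\}$ with $\eta\neq\rho$. Let $q\equiv 3\pmod 4$ and $r\equiv s\equiv 5\pmod 8$ be prime numbers such that $\left(\frac{q}{r}\right)=\left(\frac{q}{s}\right)=(-1)^{\delta_{\eta,2}}$ and $\left(\frac{r}{s}\right)=1$. \begin{enumerate} \item Write $\varepsilon_{\eta qrs}=\gamma+\gamma'\sqrt{\eta qrs}$ with integers $\gamma,\gamma'$. Then exactly one of the three numbers $2^{\delta_{\eta,1}}q(\gamma-1)$, $2r(\gamma+(-1)^{\delta_{\eta,2}})$, $2s(\gamma+(-1)^{\delta_{\eta,2}})$ is a square in $\mathbb{N}$. Moreover, there exist integers $\gamma_1,\gamma_2$ such that: (a) if $2^{\delta_{\eta,1}}q(\gamma-1)$ is a square, then $\sqrt{\eta\varepsilon_{\eta qrs}}=\gamma_1\sqrt{q}+\gamma_2\sqrt{\eta rs}$ and $\eta=-q\gamma_1^2+\eta rs\gamma_2^2$; (b) if $2r(\gamma+(-1)^{\delta_{\eta,2}})$ is a square, then $\sqrt{\eta\varepsilon_{\eta qrs}}=\gamma_1\sqrt{\eta r}+\gamma_2\sqrt{qs}$ and $\eta=(-1)^{\delta_{\eta,2}}\eta r\gamma_1^2+(-1)^{\delta_{\eta,1}}qs\gamma_2^2$; (c) if $2s(\gamma+(-1)^{\delta_{\eta,2}})$ is a square, then $\sqrt{\eta\varepsilon_{\eta qrs}}=\gamma_1\sqrt{\eta s}+\gamma_2\sqrt{qr}$ and $\eta=(-1)^{\delta_{\eta,2}}\eta s\gamma_1^2+(-1)^{\delta_{\eta,1}}qr\gamma_2^2$.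 \item Write $\varepsilon_{\rho qrs}=x+y\sqrt{\rho qrs}$ with integers $x,y$. Then exactly one of the two numbers $2^{\delta_{\rho,2}}q(x+1)$ and $2^{\delta_{\rho,2}}q(x-1)$ is a square in $\mathbb{N}$. Moreover, there exist integers $y_1,y_2$ such that: (a) if $2^{\delta_{\rho,2}}q(x+1)$ is a square, then $\sqrt{2\varepsilon_{\rho qrs}}=y_1\sqrt{\rho q}+y_2\sqrt{rs}$ and $2=\rho q y_1^2-rsy_2^2$; (b) if $2^{\delta_{\rho,2}}q(x-1)$ is a square, then $\sqrt{2\varepsilon_{\rho qrs}}=y_1\sqrt{\rho q}+y_2\sqrt{rs}$ and $2=-\rho q y_1^2+rsy_2^2$. \end{enumerate}
   Context: $\delta_{a,b}$ denotes the Kronecker delta. $\left(\frac{\cdot}{\cdot}\right)$ is the Legendre symbol. For a squarefree integer $d>1$, $\varepsilon_d$ denotes the fundamental unit ($>1$) of the real quadratic field $\mathbb{Q}(\sqrt{d})$. (Under the hypotheses, $\varepsilon_{\eta qrs}$ and $\varepsilon_{\rho qrs}$ have norm $1$ and integer coordinates.) *)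

theory Defs
  imports "HOL-Number_Theory.Number_Theory" Complex_Main
begin

definition kdelta :: "nat \<Rightarrow> nat \<Rightarrow> nat" where
  "kdelta a b = (if a = b then 1 else 0)"

text \<open>Integral basis generator of the ring of integers of Q(sqrt d), d squarefree.\<close>
definition quad_omega :: "int \<Rightarrow> real" where
  "quad_omega d = (if d mod 4 = 1 then (1 + sqrt (of_int d)) / 2 else sqrt (of_int d))"

definition quad_integer :: "int \<Rightarrow> real \<Rightarrow> bool" where
  "quad_integer d u \<longleftrightarrow> (\<exists>a b :: int. u = of_int a + of_int b * quad_omega d)"

definition quad_unit :: "int \<Rightarrow> real \<Rightarrow> bool" where
  "quad_unit d u \<longleftrightarrow> quad_integer d u \<and> u \<noteq> 0 \<and> quad_integer d (1 / u)"

definition fund_unit :: "int \<Rightarrow> real" where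
  "fund_unit d = (THE u. quad_unit d u \<and> u > 1 \<and> (\<forall>v. quad_unit d v \<and> v > 1 \<longrightarrow> u \<le> v))"

definition is_nat_square :: "int \<Rightarrow> bool" where
  "is_nat_square z \<longleftrightarrow> (\<exists>n::nat. z = int n ^ 2)"

end

theory Submission
  imports Defs "HOL-Computational_Algebra.Nth_Powers"
begin

lemma not_sq:
  fixes p m w n :: int
  assumes "prime p" "\<not> p dvd m" "w \<noteq> 0"
  shows "p * m * w^2 \<noteq> n^2"
proof
  assume H: "p * m * w^2 = n^2"
  have m0: "m \<noteq> 0" using assms(2) by auto
  have p0: "p \<noteq> 0" using assms(1) by auto
  have n0: "n \<noteq> 0" using H m0 p0 assms(3) by auto
  have pe: "prime_elem p" using assms(1) prime_def by blast
  have nu: "\<not> is_unit p" using pe prime_elem_not_unit by blast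
  have "multiplicity p (p * m * w^2) = multiplicity p (p * (m * w^2))" by (simp add: mult.assoc)
  also have "\<dots> = Suc (multiplicity p (m * w^2))"
    using m0 assms(3) p0 nu by (simp add: multiplicity_times_same)
  also have "multiplicity p (m * w^2) = multiplicity p (w^2)"
    using pe assms(2) by (simp add: multiplicity_prime_elem_times_other)
  also have "\<dots> = 2 * multiplicity p w"
    using pe assms(3) by (simp add: prime_elem_multiplicity_power_distrib)
  finally have "multiplicity p (p * m * w^2) = 1 + 2 * multiplicity p w" by simp
  moreover have "multiplicity p (n^2) = 2 * multiplicity p n"
    using pe n0 by (simp add: prime_elem_multiplicity_power_distrib)
  ultimately have "1 + 2 * multiplicity p w = 2 * multiplicity p n" using H by simp
  then show False by presburger
qed

lemma Legendre_vals: "Legendre a p \<in> {-1, 0, 1}"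
  by (auto simp: Legendre_def)

lemma Legendre_mult:
  fixes p :: nat
  assumes "prime p" "2 < p"
  shows "Legendre (a * b) (int p) = Legendre a (int p) * Legendre b (int p)"
proof -
  let ?k = "(p - 1) div 2"
  have 1: "[Legendre (a*b) (int p) = (a*b) ^ ?k] (mod int p)" using euler_criterion assms by blast
  have 2: "[Legendre a (int p) = a ^ ?k] (mod int p)" using euler_criterion assms by blast
  have 3: "[Legendre b (int p) = b ^ ?k] (mod int p)" using euler_criterion assms by blast
  have "[Legendre a (int p) * Legendre b (int p) = a ^ ?k * b ^ ?k] (mod int p)"
    using 2 3 cong_mult by blast
  then have "[Legendre (a*b) (int p) = Legendre a (int p) * Legendre b (int p)] (mod int p)"
    using 1 by (metis cong_sym cong_trans power_mult_distrib)
  then have d: "int p dvd Legendre (a*b) (int p) - Legendre a (int p) * Legendre b (int p)"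
    by (simp add: cong_iff_dvd_diff)
  have "Legendre (a*b) (int p) - Legendre a (int p) * Legendre b (int p) \<in> {-2,-1,0,1,2}"
    using Legendre_vals[of "a*b" "int p"] Legendre_vals[of a "int p"] Legendre_vals[of b "int p"]
    by auto
  moreover have "\<not> int p dvd 1" "\<not> int p dvd 2" "\<not> int p dvd -1" "\<not> int p dvd -2"
    using assms(2) by (auto dest!: zdvd_imp_le)
  ultimately show ?thesis using d by auto
qed

lemma Legendre_neg:
  fixes p :: nat
  assumes "prime p" "2 < p"
  shows "Legendre (- a) (int p) = Legendre (-1) (int p) * Legendre a (int p)"
  using Legendre_mult[OF assms, of "-1" a] by simp

lemma Legendre_one: "Legendre 1 (int p) = 1" if "prime p" "2 < p"
proof -
  have "QuadRes (int p) 1" unfolding QuadRes_def by (rule exI[of _ 1]) simp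
  moreover have "\<not> [1 = 0] (mod int p)" using that by (auto simp: cong_iff_dvd_diff dest!: zdvd_imp_le)
  ultimately show ?thesis by (simp add: Legendre_def)
qed

lemma Legendre_eq_by_cong:
  fixes p :: nat
  assumes "prime p" "2 < p" "[Legendre a (int p) = c] (mod int p)" "c \<in> {-1,1}"
  shows "Legendre a (int p) = c"
proof -
  have d: "int p dvd Legendre a (int p) - c" using assms(3) by (simp add: cong_iff_dvd_diff)
  have "Legendre a (int p) - c \<in> {-2,-1,0,1,2}"
    using Legendre_vals[of a "int p"] assms(4) by auto
  moreover have "\<not> int p dvd 1" "\<not> int p dvd 2" "\<not> int p dvd -1" "\<not> int p dvd -2"
    using assms(2) by (auto dest!: zdvd_imp_le)
  ultimately show ?thesis using d by auto
qed

lemma Legendre_minus1: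
  fixes p :: nat
  assumes "prime p" "2 < p"
  shows "p mod 4 = 1 \<Longrightarrow> Legendre (-1) (int p) = 1"
    and "p mod 4 = 3 \<Longrightarrow> Legendre (-1) (int p) = -1"
proof -
  have e: "[Legendre (-1) (int p) = (-1) ^ ((p - 1) div 2)] (mod int p)"
    using euler_criterion assms by blast
  show "p mod 4 = 1 \<Longrightarrow> Legendre (-1) (int p) = 1"
  proof -
    assume "p mod 4 = 1"
    then have "even ((p - 1) div 2)" by presburger
    then show ?thesis using e Legendre_eq_by_cong[OF assms, of "-1" 1] by simp
  qed
  show "p mod 4 = 3 \<Longrightarrow> Legendre (-1) (int p) = -1"
  proof -
    assume "p mod 4 = 3"
    then have "odd ((p - 1) div 2)" by presburger
    then show ?thesis using e Legendre_eq_by_cong[OF assms, of "-1" "-1"] by simp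
  qed
qed

lemma Legendre_sq_not:
  fixes p :: nat
  assumes "[x^2 = a] (mod int p)"
  shows "Legendre a (int p) \<noteq> -1"
  using assms unfolding Legendre_def QuadRes_def by auto

lemma reciprocity_1mod4:
  fixes p p' :: nat
  assumes "prime p" "prime p'" "p mod 4 = 1" "2 < p'" "p \<noteq> p'"
  shows "Legendre (int p) (int p') = Legendre (int p') (int p)"
proof -
  have p2: "2 < p" using assms(3) assms(1) prime_ge_2_nat[of p] by (cases "p = 2") auto
  have "even ((p - 1) div 2)" using assms(3) by presburger
  then have "Legendre (int p) (int p') * Legendre (int p') (int p) = 1"
    using Quadratic_Reciprocity[OF assms(1) p2 assms(2) assms(4) assms(5)] by simp
  then show ?thesis
    using Legendre_vals[of "int p" "int p'"] Legendre_vals[of "int p'" "int p"] by auto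
qed


lemma Legendre_two_5mod8:
  fixes p :: nat
  assumes "prime p" "p mod 8 = 5"
  shows "Legendre 2 (int p) = -1"
proof -
  obtain k where k: "p = 8*k+5" using assms(2) by (metis div_mod_decomp mult.commute)
  have p2: "2 < p" using k by simp
  have nd: "[2 \<noteq> 0] (mod int p)" using p2 by (auto simp: cong_iff_dvd_diff dest!: zdvd_imp_le)
  have G: "GAUSS p 2" unfolding GAUSS_def using assms(1) p2 nd by simp
  have h: "(int p - 1) div 2 = 4 * int k + 2" using k by simp
  have E: "GAUSS.E p 2 = (\<lambda>x. x * 2) ` {2 * int k + 2 .. 4 * int k + 2}"
  proof -
    have C: "GAUSS.C p 2 = (\<lambda>x. x * 2) ` {0<..4 * int k + 2}"
    proof -
      have "GAUSS.C p 2 = (\<lambda>x. x mod int p) ` (\<lambda>x. x * 2) ` {0<..4 * int k + 2}"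
        using G h by (simp add: GAUSS.C_def GAUSS.B_def GAUSS.A_def)
      also have "\<dots> = (\<lambda>x. x * 2) ` {0<..4 * int k + 2}"
        unfolding image_image
        by (rule image_cong) (auto simp: k)
      finally show ?thesis .
    qed
    show ?thesis
      unfolding GAUSS.E_def[OF G] C h
      by (auto simp: image_iff)
  qed
  have "card (GAUSS.E p 2) = 2 * k + 1"
  proof -
    have "card (GAUSS.E p 2) = card {2 * int k + 2 .. 4 * int k + 2}"
      unfolding E by (rule card_image) (auto simp: inj_on_def)
    also have "\<dots> = 2 * k + 1" by simp
    finally show ?thesis .
  qed
  then show ?thesis using GAUSS.gauss_lemma[OF G] by simp
qed


lemma my_dirichlet:
  fixes \<theta> :: real and N :: nat
  assumes N0: "N > 0"
  obtains h k :: int where "0 < k" "k \<le> int N" "\<bar>of_int k * \<theta> - of_int h\<bar> < 1 / real N"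
proof -
  define f where "f = (\<lambda>k::nat. nat \<lfloor>real N * frac (real k * \<theta>)\<rfloor>)"
  have fl: "\<lfloor>real N * frac (real k * \<theta>)\<rfloor> < int N" for k
  proof -
    have "real N * frac (real k * \<theta>) < real N * 1"
      using N0 frac_lt_1 by (intro mult_strict_left_mono) auto
    then show ?thesis by (simp add: floor_less_iff)
  qed
  have fl0: "0 \<le> \<lfloor>real N * frac (real k * \<theta>)\<rfloor>" for k
    by (simp add: frac_ge_0)
  have "f ` {0..N} \<subseteq> {0..<N}" using fl fl0 by (auto simp: f_def nat_less_iff)
  then have "card (f ` {0..N}) \<le> N" by (metis card_lessThan card_mono finite_lessThan atLeast0LessThan)
  then have "\<not> inj_on f {0..N}" by (auto dest: card_image)
  then obtain k1 k2 where k: "k1 \<in> {0..N}" "k2 \<in> {0..N}" "k1 \<noteq> k2" "f k1 = f k2"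
    by (auto simp: inj_on_def)
  have key: "\<exists>h k. 0 < k \<and> k \<le> int N \<and> \<bar>of_int k * \<theta> - of_int h\<bar> < 1 / real N"
    if a: "a < b" "b \<le> N" "f a = f b" for a b
  proof -
    let ?x = "real N * frac (real a * \<theta>)" and ?y = "real N * frac (real b * \<theta>)"
    have "\<lfloor>?x\<rfloor> = \<lfloor>?y\<rfloor>" using a(3) fl0[of a] fl0[of b] eq_nat_nat_iff unfolding f_def by blast
    then have "\<bar>?y - ?x\<bar> < 1" by linarith
    then have "real N * \<bar>frac (real b * \<theta>) - frac (real a * \<theta>)\<bar> < 1"
      by (simp add: right_diff_distrib[symmetric] abs_mult)
    then have d: "\<bar>frac (real b * \<theta>) - frac (real a * \<theta>)\<bar> < 1 / real N"
      using N0 by (simp add: field_simps)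
    define k where "k = int b - int a"
    define h where "h = \<lfloor>real b * \<theta>\<rfloor> - \<lfloor>real a * \<theta>\<rfloor>"
    have "of_int k * \<theta> - of_int h = frac (real b * \<theta>) - frac (real a * \<theta>)"
      by (simp add: k_def h_def frac_def algebra_simps)
    then have "\<bar>of_int k * \<theta> - of_int h\<bar> < 1 / real N" using d by simp
    moreover have "0 < k" "k \<le> int N" using a by (auto simp: k_def)
    ultimately show ?thesis by blast
  qed
  have "\<exists>h k. 0 < k \<and> k \<le> int N \<and> \<bar>of_int k * \<theta> - of_int h\<bar> < 1 / real N"
  proof (cases "k1 < k2")
    case True then show ?thesis using key[of k1 k2] k by auto
  next
    case False then have "k2 < k1" using k(3) by simp
    then show ?thesis using key[of k2 k1] k by auto
  qed
  then show ?thesis using that by blast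
qed

lemma pell_exists:
  fixes D :: int
  assumes D0: "D > 0" and nonsq: "\<And>h k. k \<noteq> 0 \<Longrightarrow> D * k^2 \<noteq> h^2"
  shows "\<exists>x y :: int. x > 0 \<and> y > 0 \<and> x^2 - D*y^2 = 1"
proof -
  define sD where "sD = sqrt (real_of_int D)"
  have sD0: "sD > 0" using D0 by (simp add: sD_def)
  have sD2: "sD^2 = real_of_int D" using D0 by (simp add: sD_def)
  define f where "f = (\<lambda>(h::int,k::int). \<bar>real_of_int k * sD - real_of_int h\<bar>)"
  define S where "S = {(h::int,k::int). k > 0 \<and> f (h,k) < 1 / real_of_int k}"
  have fpos: "f (h,k) > 0" if "k > 0" for h k
  proof (rule ccontr)
    assume "\<not> f (h,k) > 0"
    then have "real_of_int k * sD = real_of_int h" by (simp add: f_def)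
    then have "(real_of_int k * sD)^2 = (real_of_int h)^2" by simp
    then have "real_of_int (D * k^2) = real_of_int (h^2)"
      by (simp add: power_mult_distrib sD2 mult.commute)
    then have "D * k^2 = h^2" by linarith
    with nonsq[of k h] that show False by simp
  qed
  have infS: "infinite S"
  proof
    assume finS: "finite S"
    define \<delta> where "\<delta> = Min (insert 1 (f ` S))"
    have \<delta>pos: "\<delta> > 0" unfolding \<delta>_def using finS fpos
      by (subst Min_gr_iff) (auto simp: S_def)
    have \<delta>le: "\<delta> \<le> f x" if "x \<in> S" for x
      unfolding \<delta>_def using finS that by (intro Min_le) auto
    obtain N :: nat where N: "1 / \<delta> < real N" using reals_Archimedean2 by blast
    have N0: "N > 0" using N \<delta>pos
      by (metis divide_pos_pos less_numeral_extra(1) not_gr0 of_nat_0 order_less_asym)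
    obtain h k where hk: "0 < k" "k \<le> int N" "\<bar>of_int k * sD - of_int h\<bar> < 1 / real N"
      using my_dirichlet[OF N0, of sD] by blast
    have "1 / real N \<le> 1 / real_of_int k"
      using hk by (simp add: frac_le)
    then have "(h,k) \<in> S" using hk by (simp add: S_def f_def)
    then have a1: "\<delta> \<le> f (h,k)" by (rule \<delta>le)
    have a2: "f (h,k) < 1 / real N" using hk by (simp add: f_def)
    have a3: "1 / real N < \<delta>" using N \<delta>pos N0
      by (simp add: divide_less_eq mult.commute)
    show False using a1 a2 a3 by linarith
  qed
  define g where "g = (\<lambda>(h::int,k::int). h^2 - D * k^2)"
  define B where "B = \<lceil>2 * sD + 1\<rceil>"
  have gbound: "\<bar>g x\<bar> \<le> B" if "x \<in> S" for x
  proof -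
    obtain h k where x: "x = (h,k)" by force
    have k0: "k > 0" and fk: "f (h,k) < 1 / real_of_int k" using that x by (auto simp: S_def)
    define e where "e = real_of_int h - real_of_int k * sD"
    have ae: "\<bar>e\<bar> < 1 / real_of_int k" using fk by (simp add: f_def e_def abs_minus_commute)
    have kge1: "real_of_int k \<ge> 1" using k0 by simp
    have ik: "1 / real_of_int k \<le> 1" using kge1 by simp
    have eq: "real_of_int (g x) = e * (e + 2 * real_of_int k * sD)"
      by (simp add: x g_def e_def algebra_simps power2_eq_square sD2[symmetric])
    have "\<bar>e * (e + 2 * real_of_int k * sD)\<bar> \<le> \<bar>e\<bar> * (\<bar>e\<bar> + 2 * real_of_int k * sD)"
      using sD0 k0 by (simp add: abs_mult mult_left_mono abs_triangle_ineq[THEN order_trans])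
    also have "\<dots> \<le> (1 / real_of_int k) * (1 / real_of_int k + 2 * real_of_int k * sD)"
      using ae sD0 k0 by (intro mult_mono add_right_mono) auto
    also have "\<dots> = (1 / real_of_int k)^2 + 2 * sD"
      using k0 by (simp add: field_simps power2_eq_square)
    also have "\<dots> \<le> 1 + 2 * sD"
      using ik k0 by (simp add: power_le_one)
    finally have "\<bar>real_of_int (g x)\<bar> \<le> 1 + 2 * sD" using eq by simp
    then show ?thesis unfolding B_def by linarith
  qed
  have "g ` S \<subseteq> {-B..B}"
  proof
    fix z assume "z \<in> g ` S"
    then obtain x where "x \<in> S" "z = g x" by blast
    then show "z \<in> {-B..B}" using gbound[of x] by auto
  qed
  then have "finite (g ` S)" using finite_subset by blast
  from pigeonhole_infinite[OF infS this]
  obtain x0 where x0: "x0 \<in> S" and infT: "infinite {x\<in>S. g x = g x0}" by blast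
  define M where "M = g x0"
  define T where "T = {x\<in>S. g x = M}"
  have infT': "infinite T" using infT by (simp add: T_def M_def)
  have M0: "M \<noteq> 0"
  proof
    assume "M = 0"
    obtain h k where "x0 = (h,k)" by force
    with x0 \<open>M = 0\<close> have "k > 0" "h^2 - D*k^2 = 0" by (auto simp: S_def M_def g_def)
    with nonsq[of k h] show False by simp
  qed
  define \<phi> where "\<phi> = (\<lambda>(h::int,k::int). (h mod \<bar>M\<bar>, k mod \<bar>M\<bar>))"
  have "\<phi> ` T \<subseteq> {0..<\<bar>M\<bar>} \<times> {0..<\<bar>M\<bar>}" using M0 by (auto simp: \<phi>_def)
  then have "finite (\<phi> ` T)" using finite_subset by blast
  from pigeonhole_infinite[OF infT' this]
  obtain x1 where x1: "x1 \<in> T" and infU: "infinite {x\<in>T. \<phi> x = \<phi> x1}" by blast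
  define U where "U = {x\<in>T. \<phi> x = \<phi> x1}"
  have "infinite U" using infU by (simp add: U_def)
  then obtain y1 where y1: "y1 \<in> U" by (metis ex_in_conv finite.emptyI)
  have "infinite (U - {y1})" using \<open>infinite U\<close> by simp
  then obtain y2 where y2: "y2 \<in> U - {y1}" by (metis ex_in_conv finite.emptyI)
  obtain h1 k1 where e1: "y1 = (h1,k1)" by force
  obtain h2 k2 where e2: "y2 = (h2,k2)" by force
  have k1: "k1 > 0" and k2: "k2 > 0" and n1: "h1^2 - D*k1^2 = M" and n2: "h2^2 - D*k2^2 = M"
    and mh: "h1 mod \<bar>M\<bar> = h2 mod \<bar>M\<bar>" and mk: "k1 mod \<bar>M\<bar> = k2 mod \<bar>M\<bar>"
    and ne: "(h1,k1) \<noteq> (h2,k2)"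
  proof -
    have a: "y1 \<in> T" "y2 \<in> T" "\<phi> y1 = \<phi> y2" "y1 \<noteq> y2" using y1 y2 by (auto simp: U_def)
    show "k1 > 0" "k2 > 0" "h1^2 - D*k1^2 = M" "h2^2 - D*k2^2 = M"
      using a(1,2) e1 e2 by (auto simp: T_def S_def g_def)
    show "h1 mod \<bar>M\<bar> = h2 mod \<bar>M\<bar>" "k1 mod \<bar>M\<bar> = k2 mod \<bar>M\<bar>"
      using a(3) e1 e2 by (auto simp: \<phi>_def)
    show "(h1,k1) \<noteq> (h2,k2)" using a(4) e1 e2 by simp
  qed
  define X where "X = h1*h2 - D*k1*k2"
  define Y where "Y = h1*k2 - h2*k1"
  have ch: "[h2 = h1] (mod \<bar>M\<bar>)" using mh unfolding Cong.cong_def by (rule sym)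
  have ck: "[k2 = k1] (mod \<bar>M\<bar>)" using mk unfolding Cong.cong_def by (rule sym)
  have "[X = h1*h1 - D*k1*k1] (mod \<bar>M\<bar>)"
    unfolding X_def using ch ck by (intro cong_diff cong_mult cong_refl)
  moreover have "h1*h1 - D*k1*k1 = M" using n1 by (simp add: power2_eq_square mult.assoc)
  ultimately have "[X = 0] (mod \<bar>M\<bar>)" by (simp add: Cong.cong_def)
  then have "M dvd X" by (simp add: cong_0_iff)
  then obtain x where x: "X = M * x" by blast
  have "[Y = h1*k1 - h1*k1] (mod \<bar>M\<bar>)"
    unfolding Y_def using ch ck by (intro cong_diff cong_mult cong_refl)
  then have "[Y = 0] (mod \<bar>M\<bar>)" by simp
  then have "M dvd Y" by (simp add: cong_0_iff)
  then obtain y where y: "Y = M * y" by blast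
  have "X^2 - D*Y^2 = (h1^2 - D*k1^2) * (h2^2 - D*k2^2)"
    by (simp add: X_def Y_def power2_eq_square algebra_simps)
  then have "X^2 - D*Y^2 = M * M" using n1 n2 by simp
  then have "(M*x)^2 - D*(M*y)^2 = M * M" using x y by simp
  then have "M^2 * (x^2 - D*y^2) = M^2 * 1"
    by (simp add: power_mult_distrib algebra_simps power2_eq_square)
  then have xy: "x^2 - D*y^2 = 1" using M0 by simp
  have y0: "y \<noteq> 0"
  proof
    assume "y = 0"
    then have Y0: "h1*k2 = h2*k1" using y by (simp add: Y_def)
    have "M * k2^2 = (h1^2 - D*k1^2) * k2^2" using n1 by simp
    also have "\<dots> = (h1*k2)^2 - D*k1^2*k2^2" by (simp add: power_mult_distrib left_diff_distrib)
    also have "\<dots> = (h2*k1)^2 - D*k1^2*k2^2" using Y0 by simp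
    also have "\<dots> = (h2^2 - D*k2^2) * k1^2" by (simp add: power_mult_distrib left_diff_distrib)
    also have "\<dots> = M * k1^2" using n2 by simp
    finally have "k2^2 = k1^2" using M0 by simp
    then have "k1 = k2" using k1 k2 by (simp add: power2_eq_iff)
    then have "h1 = h2" using Y0 k1 by simp
    with ne \<open>k1 = k2\<close> show False by simp
  qed
  have "D*y^2 \<ge> 0" using D0 by simp
  then have "x^2 \<ge> 1" using xy by linarith
  then have "x \<noteq> 0" by (cases "x = 0") auto
  show ?thesis
    apply (rule exI[of _ "\<bar>x\<bar>"], rule exI[of _ "\<bar>y\<bar>"])
    using xy y0 \<open>x \<noteq> 0\<close> by simp
qed


locale qsetup =
  fixes D :: int
  assumes D1: "D > 1" and Dmod: "D mod 4 \<noteq> 1"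
    and nonsq: "\<And>h k. k \<noteq> 0 \<Longrightarrow> D * k^2 \<noteq> h^2"
    and noneg: "\<And>a b. a^2 - D * b^2 \<noteq> -1"
begin

lemma sD2: "(sqrt (real_of_int D))^2 = real_of_int D" using D1 by simp
lemma sD0: "sqrt (real_of_int D) > 0" using D1 by simp

lemma coord_unique:
  fixes a b a' b' :: int
  assumes "of_int a + of_int b * sqrt (real_of_int D) = of_int a' + of_int b' * sqrt (real_of_int D)"
  shows "a = a' \<and> b = b'"
proof (cases "b = b'")
  case True then show ?thesis using assms by simp
next
  case False
  have "real_of_int (b - b') * sqrt (real_of_int D) = real_of_int (a' - a)"
    using assms by (simp add: algebra_simps)
  then have "(real_of_int (b - b') * sqrt (real_of_int D))^2 = (real_of_int (a' - a))^2" by simp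
  then have "real_of_int (D * (b - b')^2) = real_of_int ((a' - a)^2)"
    by (simp add: power_mult_distrib sD2 mult.commute)
  then have "D * (b - b')^2 = (a' - a)^2" by linarith
  with nonsq[of "b - b'" "a' - a"] False show ?thesis by simp
qed

lemma omega: "quad_omega D = sqrt (real_of_int D)"
  using Dmod by (simp add: quad_omega_def)

lemma unit_intro:
  fixes a b :: int
  assumes "a^2 - D * b^2 = 1"
  shows "quad_unit D (of_int a + of_int b * sqrt (real_of_int D))"
proof -
  let ?s = "sqrt (real_of_int D)"
  have prod: "(of_int a + of_int b * ?s) * (of_int a - of_int b * ?s) = 1"
  proof -
    have "(of_int a + of_int b * ?s) * (of_int a - of_int b * ?s) = real_of_int a ^2 - real_of_int b^2 * ?s^2"
      by (simp add: algebra_simps power2_eq_square)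
    also have "\<dots> = real_of_int (a^2 - D * b^2)" by (simp add: sD2)
    finally show ?thesis using assms by simp
  qed
  then have ne: "of_int a + of_int b * ?s \<noteq> 0" by auto
  have inv: "1 / (of_int a + of_int b * ?s) = of_int a + of_int (-b) * ?s"
    using prod ne by (simp add: field_simps)
  show ?thesis unfolding quad_unit_def quad_integer_def omega
    using ne inv by blast
qed

lemma unit_char:
  assumes "quad_unit D v" "v > 1"
  shows "\<exists>a b :: int. v = of_int a + of_int b * sqrt (real_of_int D) \<and> a > 0 \<and> b > 0 \<and> a^2 - D*b^2 = 1"
proof -
  let ?s = "sqrt (real_of_int D)"
  obtain a b a' b' :: int where v: "v = of_int a + of_int b * ?s"
    and iv: "1 / v = of_int a' + of_int b' * ?s" and v0: "v \<noteq> 0"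
    using assms(1) unfolding quad_unit_def quad_integer_def omega by blast
  have "1 = v * (1 / v)" using v0 by simp
  also have "\<dots> = of_int a * of_int a' + of_int b * of_int b' * ?s^2 + (of_int a * of_int b' + of_int a' * of_int b) * ?s"
    unfolding iv unfolding v by (simp add: algebra_simps power2_eq_square)
  also have "\<dots> = of_int (a*a' + D*b*b') + of_int (a*b' + a'*b) * ?s"
    by (simp add: sD2)
  finally have "of_int 1 + of_int 0 * ?s = of_int (a*a' + D*b*b') + of_int (a*b' + a'*b) * ?s" by simp
  from coord_unique[OF this] have e1: "a*a' + D*b*b' = 1" and e2: "a*b' + a'*b = 0" by auto
  have "(a^2 - D*b^2) * (a'^2 - D*b'^2) = (a*a' + D*b*b')^2 - D*(a*b' + a'*b)^2"
    by (simp add: algebra_simps power2_eq_square)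
  also have "\<dots> = 1" using e1 e2 by simp
  finally have "(a^2 - D*b^2) * (a'^2 - D*b'^2) = 1" .
  then have "a^2 - D*b^2 = 1 \<or> a^2 - D*b^2 = -1" using zmult_eq_1_iff by blast
  then have n1: "a^2 - D*b^2 = 1" using noneg by blast
  have prod: "(of_int a + of_int b * ?s) * (of_int a - of_int b * ?s) = 1"
  proof -
    have "(of_int a + of_int b * ?s) * (of_int a - of_int b * ?s) = real_of_int a ^2 - real_of_int b^2 * ?s^2"
      by (simp add: algebra_simps power2_eq_square)
    also have "\<dots> = real_of_int (a^2 - D * b^2)" by (simp add: sD2)
    finally show ?thesis using n1 by simp
  qed
  have w: "of_int a - of_int b * ?s = 1 / v" using prod v0 v by (simp add: field_simps)
  have w0: "0 < 1 / v" "1 / v < 1" using assms(2) by auto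
  have "2 * of_int a = v + 1 / v" using v w by simp
  then have "real_of_int a > 0" using w0 assms(2) by linarith
  then have a0: "a > 0" by simp
  have "2 * (of_int b * ?s) = v - 1 / v" using v w by simp
  then have "of_int b * ?s > 0" using w0 assms(2) by linarith
  then have "real_of_int b > 0" using sD0 by (simp add: zero_less_mult_iff)
  then have b0: "b > 0" by simp
  show ?thesis using v a0 b0 n1 by blast
qed

lemma fund_props:
  "\<exists>a b :: int. fund_unit D = of_int a + of_int b * sqrt (real_of_int D) \<and> a > 0 \<and> b > 0 \<and> a^2 - D*b^2 = 1
     \<and> (\<forall>m n :: int. m > 0 \<longrightarrow> n > 0 \<longrightarrow> m^2 - D*n^2 = 1 \<longrightarrow> fund_unit D \<le> of_int m + of_int n * sqrt (real_of_int D))"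
proof -
  let ?s = "sqrt (real_of_int D)"
  define P where "P = (\<lambda>n::nat. n > 0 \<and> (\<exists>a::int. a > 0 \<and> a^2 - D * (int n)^2 = 1))"
  obtain x y :: int where xy: "x > 0" "y > 0" "x^2 - D*y^2 = 1"
    using pell_exists[of D] D1 nonsq by auto
  have "P (nat y)" unfolding P_def using xy by auto
  define b0 where "b0 = (LEAST n. P n)"
  have Pb0: "P b0" unfolding b0_def by (rule LeastI) fact
  have b0min: "\<And>n. P n \<Longrightarrow> b0 \<le> n" unfolding b0_def by (rule Least_le)
  obtain a0 where a0: "a0 > 0" "a0^2 - D * (int b0)^2 = 1" and b0pos: "b0 > 0"
    using Pb0 unfolding P_def by blast
  define u0 where "u0 = of_int a0 + of_int (int b0) * ?s"
  have minim: "u0 \<le> of_int u + of_int v * ?s" if "u > 0" "v > 0" "u^2 - D* v^2 = 1" for u v :: int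
  proof -
    have "P (nat v)" unfolding P_def using that by auto
    then have "b0 \<le> nat v" by (rule b0min)
    then have bv: "int b0 \<le> v" using le_nat_iff[of v b0] that(2) by simp
    then have "(int b0)^2 \<le> v^2" by (simp add: power_mono)
    then have "D * (int b0)^2 \<le> D * v^2" using D1 by simp
    then have "a0^2 \<le> u^2" using a0 that by linarith
    then have au: "a0 \<le> u" using that a0 by (simp add: abs_le_square_iff[symmetric] abs_of_pos)
    have "real_of_int (int b0) * ?s \<le> of_int v * ?s" using bv sD0 by (intro mult_right_mono) auto
    then show ?thesis unfolding u0_def using au by linarith
  qed
  have Q: "quad_unit D u0 \<and> u0 > 1 \<and> (\<forall>v. quad_unit D v \<and> v > 1 \<longrightarrow> u0 \<le> v)"
  proof (intro conjI allI impI)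
    show "quad_unit D u0" unfolding u0_def by (rule unit_intro) (use a0 in simp)
    have "real_of_int a0 \<ge> 1" using a0 by simp
    moreover have "real_of_int (int b0) * ?s > 0" using b0pos sD0 by simp
    ultimately show "u0 > 1" unfolding u0_def by linarith
    fix v assume "quad_unit D v \<and> v > 1"
    then obtain a b where "v = of_int a + of_int b * ?s" "a > 0" "b > 0" "a^2 - D*b^2 = 1"
      using unit_char by blast
    then show "u0 \<le> v" using minim by simp
  qed
  have F: "fund_unit D = u0"
    unfolding fund_unit_def
  proof (rule the_equality)
    show "quad_unit D u0 \<and> u0 > 1 \<and> (\<forall>v. quad_unit D v \<and> v > 1 \<longrightarrow> u0 \<le> v)" by (rule Q)
    fix u assume "quad_unit D u \<and> 1 < u \<and> (\<forall>v. quad_unit D v \<and> 1 < v \<longrightarrow> u \<le> v)"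
    then have "u \<le> u0" "u0 \<le> u" using Q by auto
    then show "u = u0" by simp
  qed
  show ?thesis
    apply (rule exI[of _ a0], rule exI[of _ "int b0"])
    using F a0 b0pos minim u0_def by simp
qed

end

lemma dvd_prime_mult_cases:
  fixes p m x :: int
  assumes "prime p" "x dvd p * m" "x > 0"
  shows "x dvd m \<or> (\<exists>y. x = p * y \<and> y dvd m \<and> y > 0)"
proof (cases "p dvd x")
  case True
  then obtain y where y: "x = p * y" by blast
  have p0: "p > 0" using assms(1) prime_gt_0_int by blast
  have "y > 0" using y assms(3) p0 by (simp add: zero_less_mult_iff)
  moreover have "y dvd m" using assms(2) y p0 by simp
  ultimately show ?thesis using y by blast
next
  case False
  then have "coprime p x" using assms(1) by (simp add: prime_imp_coprime)
  then have "coprime x p" by (simp add: coprime_commute)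
  then have "x dvd m" using assms(2) coprime_dvd_mult_right_iff by blast
  then show ?thesis by blast
qed

lemma dvd_prime_cases:
  fixes p x :: int
  assumes "prime p" "x dvd p" "x > 0"
  shows "x = 1 \<or> x = p"
proof -
  have "x dvd p * 1" using assms(2) by simp
  from dvd_prime_mult_cases[OF assms(1) this assms(3)] show ?thesis
  proof
    assume "x dvd 1" then show ?thesis using assms(3) by simp
  next
    assume "\<exists>y. x = p * y \<and> y dvd 1 \<and> y > 0"
    then show ?thesis by auto
  qed
qed

lemma div2:
  fixes p2 p3 y :: int
  assumes "prime p2" "prime p3" "y dvd p2 * p3" "y > 0"
  shows "y = 1 \<or> y = p3 \<or> y = p2 \<or> y = p2 * p3"
proof -
  from dvd_prime_mult_cases[OF assms(1) assms(3,4)] show ?thesis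
  proof (elim disjE exE conjE)
    assume "y dvd p3" then show ?thesis using dvd_prime_cases[OF assms(2) _ assms(4)] by blast
  next
    fix y' assume "y = p2 * y'" "y' dvd p3" "y' > 0"
    then show ?thesis using dvd_prime_cases[OF assms(2), of y'] by auto
  qed
qed

lemma div3:
  fixes p1 p2 p3 x :: int
  assumes "prime p1" "prime p2" "prime p3" "x dvd p1 * p2 * p3" "x > 0"
  shows "x = 1 \<or> x = p3 \<or> x = p2 \<or> x = p2 * p3 \<or> x = p1 \<or> x = p1 * p3 \<or> x = p1 * p2 \<or> x = p1 * p2 * p3"
proof -
  have "x dvd p1 * (p2 * p3)" using assms(4) by (simp add: mult.assoc)
  from dvd_prime_mult_cases[OF assms(1) this assms(5)] show ?thesis
  proof (elim disjE exE conjE)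
    assume "x dvd p2 * p3" then show ?thesis using div2[OF assms(2,3) _ assms(5)] by blast
  next
    fix y assume "x = p1 * y" "y dvd p2 * p3" "y > 0"
    then show ?thesis using div2[OF assms(2,3), of y] by (auto simp: mult.assoc)
  qed
qed

lemma div4:
  fixes p0 p1 p2 p3 x :: int
  assumes "prime p0" "prime p1" "prime p2" "prime p3" "x dvd p0 * p1 * p2 * p3" "x > 0"
  shows "x = 1 \<or> x = p3 \<or> x = p2 \<or> x = p2 * p3 \<or> x = p1 \<or> x = p1 * p3 \<or> x = p1 * p2 \<or> x = p1 * p2 * p3
    \<or> x = p0 \<or> x = p0 * p3 \<or> x = p0 * p2 \<or> x = p0 * p2 * p3 \<or> x = p0 * p1 \<or> x = p0 * p1 * p3 \<or> x = p0 * p1 * p2 \<or> x = p0 * p1 * p2 * p3"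
proof -
  have "x dvd p0 * (p1 * p2 * p3)" using assms(5) by (simp add: mult.assoc)
  from dvd_prime_mult_cases[OF assms(1) this assms(6)] show ?thesis
  proof (elim disjE exE conjE)
    assume "x dvd p1 * p2 * p3" then show ?thesis using div3[OF assms(2,3,4) _ assms(6)] by blast
  next
    fix y assume "x = p0 * y" "y dvd p1 * p2 * p3" "y > 0"
    then show ?thesis using div3[OF assms(2,3,4), of y] by (auto simp: mult.assoc)
  qed
qed

lemma coprime_sq_nat:
  fixes a b w :: int
  assumes "a > 0" "b > 0" "coprime a b" "a * b = w^2"
  shows "\<exists>u. u > 0 \<and> a = u^2"
proof -
  have c: "coprime (nat a) (nat b)" using assms(1,2,3) by (simp add: coprime_int_iff[symmetric])
  have "nat a * nat b = nat (w^2)" using assms by (simp add: nat_mult_distrib[symmetric])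
  also have "\<dots> = (nat \<bar>w\<bar>)^2" by (metis abs_ge_zero nat_power_eq power2_abs)
  finally have "is_nth_power 2 (nat a * nat b)" by (auto simp: is_nth_power_def)
  then have "is_nth_power 2 (nat a)" using is_nth_power_mult_coprime_natD(1)[OF c] assms by simp
  then obtain u' where "nat a = u'^2" by (auto simp: is_nth_power_def)
  then have "int (nat a) = (int u')^2" by simp
  then have "a = (int u')^2" using assms(1) by simp
  moreover have "int u' > 0" using assms(1) \<open>a = (int u')^2\<close> by (cases "u' = 0") auto
  ultimately show ?thesis by blast
qed

lemma decomp:
  fixes a b w D :: int
  assumes "a > 0" "b > 0" "coprime a b" "a * b = D * w^2" "D > 0" "w > 0"
  shows "\<exists>d1 d2 u v. d1 > 0 \<and> d2 > 0 \<and> u > 0 \<and> v > 0 \<and> d1 * d2 = D \<and> a = d1 * u^2 \<and> b = d2 * v^2 \<and> w = u * v"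
proof -
  define d1 where "d1 = gcd a D"
  have d1pos: "d1 > 0" using assms(5) by (simp add: d1_def)
  obtain a' where a': "a = d1 * a'" unfolding d1_def by (meson gcd_dvd1 dvdE)
  obtain d2 where d2: "D = d1 * d2" unfolding d1_def by (meson gcd_dvd2 dvdE)
  have d2pos: "d2 > 0" using d2 d1pos assms(5) by (simp add: zero_less_mult_iff)
  have a'pos: "a' > 0" using a' d1pos assms(1) by (simp add: zero_less_mult_iff)
  have g: "gcd a D = gcd (d1 * a') (d1 * d2)" using a' d2 by simp
  have "d1 = gcd (d1 * a') (d1 * d2)" using g by (simp only: d1_def[symmetric])
  also have "\<dots> = d1 * gcd a' d2" using d1pos by (simp add: gcd_mult_left)
  finally have "gcd a' d2 = 1" using d1pos by simp
  then have cad: "coprime a' d2" by (simp add: coprime_iff_gcd_eq_1)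
  have "d1 * (a' * b) = d1 * (d2 * w^2)" using assms(4) a' d2 by (simp add: mult.assoc)
  then have e: "a' * b = d2 * w^2" using d1pos by simp
  then have "d2 dvd a' * b" by simp
  then have "d2 dvd b" using cad by (simp add: coprime_commute coprime_dvd_mult_right_iff)
  then obtain b' where b': "b = d2 * b'" by blast
  have b'pos: "b' > 0" using b' d2pos assms(2) by (simp add: zero_less_mult_iff)
  have "d2 * (a' * b') = d2 * w^2" using e b' by (simp add: algebra_simps)
  then have ab: "a' * b' = w^2" using d2pos by simp
  have cab: "coprime a' b'" using assms(3) a' b' by (simp add: coprime_mult_left_iff coprime_mult_right_iff)
  obtain u where u: "u > 0" "a' = u^2" using coprime_sq_nat[OF a'pos b'pos cab ab] by blast
  obtain v where v: "v > 0" "b' = v^2"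
    using coprime_sq_nat[OF b'pos a'pos _ ] cab ab by (metis coprime_commute mult.commute)
  have "w^2 = (u* v)^2" using ab u v by (simp add: power_mult_distrib)
  moreover have "u * v > 0" using u v by simp
  ultimately have "w = u * v" using assms(6) by (auto simp: power2_eq_iff)
  then show ?thesis using d1pos d2pos u v a' b' d2 by blast
qed


lemma excl_d1:
  fixes p :: nat and c d1 d2 u v :: int
  assumes "int p dvd d1" "d1 * u^2 - d2 * v^2 = c"
    and "Legendre (-1) (int p) * Legendre (c * d2) (int p) = -1" "prime p" "2 < p"
  shows False
proof -
  have "(d2 * v)^2 - (- (c * d2)) = d2 * d1 * u^2"
    by (simp add: assms(2)[symmetric] algebra_simps power2_eq_square)
  then have "int p dvd (d2 * v)^2 - (- (c * d2))" using assms(1) by simp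
  then have "[(d2 * v)^2 = - (c * d2)] (mod int p)" by (simp add: cong_iff_dvd_diff)
  then have "Legendre (- (c * d2)) (int p) \<noteq> -1" by (rule Legendre_sq_not)
  moreover have "Legendre (- (c * d2)) (int p) = Legendre (-1) (int p) * Legendre (c * d2) (int p)"
    using Legendre_mult[OF assms(4,5), of "-1" "c * d2"] by simp
  ultimately show False using assms(3) by simp
qed

lemma excl_d2:
  fixes p :: nat and c d1 d2 u v :: int
  assumes "int p dvd d2" "d1 * u^2 - d2 * v^2 = c"
    and "Legendre (c * d1) (int p) = -1"
  shows False
proof -
  have "(d1 * u)^2 - c * d1 = d1 * d2 * v^2"
    by (simp add: assms(2)[symmetric] algebra_simps power2_eq_square)
  then have "int p dvd (d1 * u)^2 - c * d1" using assms(1) by simp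
  then have "[(d1 * u)^2 = c * d1] (mod int p)" by (simp add: cong_iff_dvd_diff)
  then have "Legendre (c * d1) (int p) \<noteq> -1" by (rule Legendre_sq_not)
  then show False using assms(3) by simp
qed

lemma min_contra:
  fixes D u v g g' :: int
  assumes "D > 0" "u > 0" "v > 0" "u^2 - D * v^2 = 1" "g = u^2 + D * v^2" "g' = 2 * u * v"
    and minim: "\<forall>m n :: int. m > 0 \<longrightarrow> n > 0 \<longrightarrow> m^2 - D*n^2 = 1 \<longrightarrow>
       of_int g + of_int g' * sqrt (real_of_int D) \<le> of_int m + of_int n * sqrt (real_of_int D)"
  shows False
proof -
  let ?s = "sqrt (real_of_int D)"
  define t where "t = of_int u + of_int v * ?s"
  have s2: "?s^2 = real_of_int D" using assms(1) by simp
  have s0: "?s > 0" using assms(1) by simp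
  have t1: "t > 1"
  proof -
    have "real_of_int u \<ge> 1" using assms(2) by simp
    moreover have "real_of_int v * ?s > 0" using assms(3) s0 by simp
    ultimately show ?thesis unfolding t_def by linarith
  qed
  have "t^2 = of_int u ^2 + of_int v^2 * ?s^2 + 2 * of_int u * of_int v * ?s"
    unfolding t_def by (simp add: algebra_simps power2_eq_square)
  also have "\<dots> = of_int g + of_int g' * ?s" using assms(5,6) s2 by simp
  finally have tt: "t^2 = of_int g + of_int g' * ?s" .
  have "of_int g + of_int g' * ?s \<le> t" unfolding t_def using minim assms(2,3,4) by blast
  then have "t^2 \<le> t" using tt by simp
  moreover have "t < t^2" using t1 by (simp add: power2_eq_square)
  ultimately show False by simp
qed

lemma sqrt_rep:
  fixes A B g g' :: int and P Q Dn k :: nat and eps :: real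
  assumes "A \<ge> 0" "B \<ge> 0" "P * Q = Dn"
    and "int k * g = A^2 * int P + B^2 * int Q" "int k * g' = 2 * A * B"
    and "eps = of_int g + of_int g' * sqrt (real Dn)"
  shows "sqrt (real k * eps) = of_int A * sqrt (real P) + of_int B * sqrt (real Q)"
proof -
  let ?R = "of_int A * sqrt (real P) + of_int B * sqrt (real Q)"
  have R0: "?R \<ge> 0" using assms(1,2) by simp
  have "?R^2 = (of_int A)^2 * (sqrt (real P))^2 + (of_int B)^2 * (sqrt (real Q))^2
      + 2 * of_int A * of_int B * (sqrt (real P) * sqrt (real Q))"
    by (simp add: algebra_simps power2_eq_square)
  also have "\<dots> = real_of_int (A^2 * int P + B^2 * int Q) + real_of_int (2 * A * B) * sqrt (real Dn)"
    by (simp add: real_sqrt_mult[symmetric] assms(3)[symmetric])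
  also have "\<dots> = real_of_int (int k * g) + real_of_int (int k * g') * sqrt (real Dn)"
    using assms(4,5) by simp
  also have "\<dots> = real k * eps" using assms(6) by (simp add: algebra_simps)
  finally have "?R^2 = real k * eps" .
  then show ?thesis using R0 by (metis real_sqrt_abs abs_of_nonneg)
qed

lemma nat_sq_yes: "is_nat_square (t^2)"
  unfolding is_nat_square_def by (rule exI[of _ "nat \<bar>t\<bar>"]) simp

lemma nat_sq_no:
  fixes p m w :: int
  assumes "prime p" "\<not> p dvd m" "w \<noteq> 0"
  shows "\<not> is_nat_square (p * m * w^2)"
  unfolding is_nat_square_def using not_sq[OF assms] by auto

lemma coprime_odd_pair:
  fixes g :: int
  assumes "even g"
  shows "coprime (g + 1) (g - 1)"
proof (rule coprimeI)
  fix c assume c1: "c dvd g + 1" and c2: "c dvd g - 1"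
  have "c dvd (g + 1) - (g - 1)" using c1 c2 by (rule dvd_diff)
  then have c2': "c dvd 2" by simp
  have "\<not> 2 dvd c"
  proof
    assume "2 dvd c" then have "2 dvd g + 1" using c1 by (rule dvd_trans)
    then show False using assms by simp
  qed
  have "\<bar>c\<bar> dvd 2" using c2' by simp
  then have "\<bar>c\<bar> \<le> 2" by (rule zdvd_imp_le) simp
  have "c \<noteq> 0" using c2' by auto
  then have "c \<in> {-2,-1,1,2}" using \<open>\<bar>c\<bar> \<le> 2\<close> by auto
  then show "is_unit c" using \<open>\<not> 2 dvd c\<close> by auto
qed

lemma even_decomp:
  fixes g g' D :: int
  assumes "g^2 - D * g'^2 = 1" "g > 0" "g' > 0" "even g" "D > 0"
  shows "\<exists>d1 d2 u v. d1 > 0 \<and> d2 > 0 \<and> u > 0 \<and> v > 0 \<and> d1 * d2 = D \<and> g + 1 = d1 * u^2 \<and> g - 1 = d2 * v^2 \<and> g' = u * v"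
proof -
  have "g \<noteq> 1" using assms(4) by auto
  then have "g - 1 > 0" using assms(2) by simp
  moreover have "(g + 1) * (g - 1) = D * g'^2" using assms(1) by (simp add: algebra_simps power2_eq_square)
  ultimately show ?thesis using decomp[of "g+1" "g-1" D g'] coprime_odd_pair[OF assms(4)] assms by simp
qed

lemma odd_decomp:
  fixes g g' D :: int
  assumes "g^2 - D * g'^2 = 1" "g > 0" "g' > 0" "odd g" "D > 0" "D mod 4 \<noteq> 0"
  shows "\<exists>d1 d2 u v. d1 > 0 \<and> d2 > 0 \<and> u > 0 \<and> v > 0 \<and> d1 * d2 = D \<and> g + 1 = 2 * d1 * u^2 \<and> g - 1 = 2 * d2 * v^2 \<and> g' = 2 * u * v"
proof -
  obtain k where k: "g = 2 * k + 1" using assms(4) by (metis oddE)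
  have ev: "even g'"
  proof (rule ccontr)
    assume og: "odd g'"
    obtain j where j: "g' = 2 * j + 1" using og by (metis oddE)
    have "even (k * (k + 1))" by simp
    then obtain m where m: "k * (k + 1) = 2 * m" by (rule evenE)
    have "g^2 - 1 = 8 * m" using k m by (simp add: algebra_simps power2_eq_square)
    have "even (j * (j + 1))" by simp
    then obtain n where n: "j * (j + 1) = 2 * n" by (rule evenE)
    have "g'^2 = 1 + 8 * n" using j n by (simp add: algebra_simps power2_eq_square)
    have "D * g'^2 = g^2 - 1" using assms(1) by simp
    then have "D + 8 * (D * n) = 8 * m" using \<open>g'^2 = 1 + 8 * n\<close> \<open>g^2 - 1 = 8 * m\<close>
      by (simp add: algebra_simps)
    then have "D = 4 * (2 * (m - D * n))" by (simp add: algebra_simps)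
    then obtain t where "D = 4 * t" by blast
    then have "D mod 4 = 0" by simp
    then show False using assms(6) by simp
  qed
  then obtain w where w: "g' = 2 * w" by blast
  have w0: "w > 0" using w assms(3) by simp
  have "k \<noteq> 0"
  proof
    assume "k = 0" then have "D * g'^2 = 0" using k assms(1) by simp
    then show False using assms(3,5) by simp
  qed
  then have kpos: "k > 0" using k assms(2) by simp
  have prod: "(k + 1) * k = D * w^2"
  proof -
    have "4 * ((k + 1) * k) = 4 * (D * w^2)"
      using assms(1) k w by (simp add: algebra_simps power2_eq_square)
    then show ?thesis by simp
  qed
  have cop: "coprime (k + 1) k"
  proof (rule coprimeI)
    fix c assume "c dvd k + 1" "c dvd k"
    then have "c dvd (k + 1) - k" by (rule dvd_diff)
    then show "is_unit c" by simp
  qed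
  obtain d1 d2 u v where dd: "d1 > 0" "d2 > 0" "u > 0" "v > 0" "d1 * d2 = D" "k + 1 = d1 * u^2" "k = d2 * v^2" "w = u * v"
    using decomp[of "k+1" k D w] kpos cop prod assms(5) w0 by auto
  show ?thesis
    apply (rule exI[of _ d1], rule exI[of _ d2], rule exI[of _ u], rule exI[of _ v])
    using dd k w by simp
qed


locale qrs =
  fixes q r s :: nat and e :: int
  assumes pq: "prime q" and pr: "prime r" and ps: "prime s"
    and q4: "q mod 4 = 3" and r8: "r mod 8 = 5" and s8: "s mod 8 = 5"
    and Lqr: "Legendre (int q) (int r) = e" and Lqs: "Legendre (int q) (int s) = e"
    and Lrs: "Legendre (int r) (int s) = 1"
    and e: "e = 1 \<or> e = -1"
begin

lemma q2: "2 < q" using pq q4 prime_ge_2_nat[of q] by (cases "q = 2") auto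
lemma r2: "2 < r" using pr r8 prime_ge_2_nat[of r] by (cases "r = 2") auto
lemma s2: "2 < s" using ps s8 prime_ge_2_nat[of s] by (cases "s = 2") auto
lemma r4: "r mod 4 = 1" using r8 by presburger
lemma s4: "s mod 4 = 1" using s8 by presburger
lemma qr: "q \<noteq> r" using q4 r4 by auto
lemma qs: "q \<noteq> s" using q4 s4 by auto
lemma rs: "r \<noteq> s"
proof
  assume "r = s"
  then have "Legendre (int r) (int r) = 1" using Lrs by simp
  moreover have "[int r = 0] (mod int r)" by (simp add: cong_0_iff)
  ultimately show False by (simp add: Legendre_def)
qed

lemma ipq: "prime (int q)" using pq by simp
lemma ipr: "prime (int r)" using pr by simp
lemma ips: "prime (int s)" using ps by simp
lemma ip2: "prime (2::int)" by simp

lemma Lm1q: "Legendre (-1) (int q) = -1" using Legendre_minus1(2)[OF pq q2 q4] .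
lemma Lm1r: "Legendre (-1) (int r) = 1" using Legendre_minus1(1)[OF pr r2 r4] .
lemma Lm1s: "Legendre (-1) (int s) = 1" using Legendre_minus1(1)[OF ps s2 s4] .
lemma L2r: "Legendre 2 (int r) = -1" using Legendre_two_5mod8[OF pr r8] .
lemma L2s: "Legendre 2 (int s) = -1" using Legendre_two_5mod8[OF ps s8] .
lemma Lrq: "Legendre (int r) (int q) = e"
  using reciprocity_1mod4[OF pr pq r4 q2] qr Lqr by simp
lemma Lsq: "Legendre (int s) (int q) = e"
  using reciprocity_1mod4[OF ps pq s4 q2] qs Lqs by simp
lemma Lsr: "Legendre (int s) (int r) = 1"
  using reciprocity_1mod4[OF ps pr s4 r2] rs Lrs by simp
lemma L1: "Legendre 1 (int q) = 1" "Legendre 1 (int r) = 1" "Legendre 1 (int s) = 1"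
  using Legendre_one q2 r2 s2 pq pr ps by auto
lemma Lmult: "Legendre (a * b) (int q) = Legendre a (int q) * Legendre b (int q)"
  "Legendre (a * b) (int r) = Legendre a (int r) * Legendre b (int r)"
  "Legendre (a * b) (int s) = Legendre a (int s) * Legendre b (int s)"
  using Legendre_mult q2 r2 s2 pq pr ps by auto

lemmas Lsimps = Lm1q Lm1r Lm1s L2r L2s Lrq Lsq Lsr Lqr Lqs Lrs L1 Lmult

lemma ndvd1: "\<not> int q dvd int r" "\<not> int q dvd int s" "\<not> int r dvd int q" "\<not> int r dvd int s"
  "\<not> int s dvd int q" "\<not> int s dvd int r"
  using pq pr ps qr qs rs by (auto dest: primes_dvd_imp_eq)
lemma ndvd2: "\<not> int q dvd 2" "\<not> int r dvd 2" "\<not> int s dvd 2"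
  "\<not> int q dvd 1" "\<not> int r dvd 1" "\<not> int s dvd 1"
  using q2 r2 s2 by (auto dest!: zdvd_imp_le)
lemmas ndvd = ndvd1 ndvd2

lemma nz: "int q \<noteq> 0" "int r \<noteq> 0" "int s \<noteq> 0" using q2 r2 s2 by auto

end

lemma odd_decomp2:
  fixes g g' D :: int
  assumes "g^2 - D * g'^2 = 1" "g > 0" "g' > 0" "odd g" "D > 0" "D mod 4 \<noteq> 0"
  obtains d1 d2 u v where "d1 > 0" "d2 > 0" "u > 0" "v > 0" "d1 * d2 = D"
    "g = 2 * d1 * u^2 - 1" "g = 2 * d2 * v^2 + 1" "g' = 2 * u * v"
    "g = d1 * u^2 + d2 * v^2" "d1 * u^2 - d2 * v^2 = 1"
proof -
  obtain d1 d2 u v where dd: "d1 > 0" "d2 > 0" "u > 0" "v > 0" "d1 * d2 = D"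
    "g + 1 = 2 * d1 * u^2" "g - 1 = 2 * d2 * v^2" "g' = 2 * u * v"
    using odd_decomp[OF assms] by blast
  have a: "g = 2 * d1 * u^2 - 1" "g = 2 * d2 * v^2 + 1" using dd by linarith+
  have b1: "2 * d1 * u^2 = 2 * (d1 * u^2)" "2 * d2 * v^2 = 2 * (d2 * v^2)" by simp_all
  have "g = d1 * u^2 + d2 * v^2" "d1 * u^2 - d2 * v^2 = 1" using a b1 by linarith+
  then show ?thesis using that dd a by blast
qed

lemma even_decomp2:
  fixes g g' D :: int
  assumes "g^2 - D * g'^2 = 1" "g > 0" "g' > 0" "even g" "D > 0"
  obtains d1 d2 u v where "d1 > 0" "d2 > 0" "u > 0" "v > 0" "d1 * d2 = D"
    "g = d1 * u^2 - 1" "g = d2 * v^2 + 1" "g' = u * v"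
    "2 * g = d1 * u^2 + d2 * v^2" "d1 * u^2 - d2 * v^2 = 2"
proof -
  obtain d1 d2 u v where dd: "d1 > 0" "d2 > 0" "u > 0" "v > 0" "d1 * d2 = D"
    "g + 1 = d1 * u^2" "g - 1 = d2 * v^2" "g' = u * v"
    using even_decomp[OF assms] by blast
  have a: "g = d1 * u^2 - 1" "g = d2 * v^2 + 1" using dd by linarith+
  have "2 * g = d1 * u^2 + d2 * v^2" "d1 * u^2 - d2 * v^2 = 2" using a by linarith+
  then show ?thesis using that dd a by blast
qed

lemma odd_prod3: "prime q \<Longrightarrow> prime r \<Longrightarrow> prime s \<Longrightarrow> 2 < q \<Longrightarrow> 2 < r \<Longrightarrow> 2 < s \<Longrightarrow>
  odd (int q * int r * int s)"
  by (simp add: prime_odd_nat)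


lemma (in qrs) P1_eta1:
  fixes g g' :: int and eps :: real
  assumes ee: "e = 1"
    and nrm: "g^2 - (int q * int r * int s) * g'^2 = 1" and gpos: "g > 0" and g'pos: "g' > 0"
    and minim: "\<forall>m n :: int. m > 0 \<longrightarrow> n > 0 \<longrightarrow> m^2 - (int q * int r * int s) * n^2 = 1 \<longrightarrow>
       of_int g + of_int g' * sqrt (real_of_int (int q * int r * int s)) \<le> of_int m + of_int n * sqrt (real_of_int (int q * int r * int s))"
    and eps: "eps = of_int g + of_int g' * sqrt (real (q*r*s))"
  shows "let A = is_nat_square (2 * int q * (g - 1)); B = is_nat_square (2 * int r * (g + 1)); C = is_nat_square (2 * int s * (g + 1)) in ((A \<and> \<not> B \<and> \<not> C) \<or> (\<not> A \<and> B \<and> \<not> C) \<or> (\<not> A \<and> \<not> B \<and> C)) \<and> (\<exists>\<gamma>1 \<gamma>2 :: int. (A \<longrightarrow> sqrt eps = of_int \<gamma>1 * sqrt (real q) + of_int \<gamma>2 * sqrt (real (r*s)) \<and> 1 = - int q * \<gamma>1^2 + int (r*s) * \<gamma>2^2) \<and> (B \<longrightarrow> sqrt eps = of_int \<gamma>1 * sqrt (real r) + of_int \<gamma>2 * sqrt (real (q*s)) \<and> 1 = int r * \<gamma>1^2 - int (q*s) * \<gamma>2^2) \<and> (C \<longrightarrow> sqrt eps = of_int \<gamma>1 * sqrt (real s) + of_int \<gamma>2 * sqrt (real (q*r)) \<and> 1 = int s * \<gamma>1^2 - int (q*r) * \<gamma>2^2))"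
proof -
  have Dpos: "int q * int r * int s > 0" using nz q2 r2 s2 by simp
  have oddD: "odd (int q * int r * int s)" using odd_prod3[OF pq pr ps q2 r2 s2] .
  have u4: "(int q * int r * int s) mod 4 \<noteq> 0"
  proof
    assume "(int q * int r * int s) mod 4 = 0"
    then have "4 dvd int q * int r * int s" by (simp add: dvd_eq_mod_eq_0)
    then have "4 dvd int q * int r * int s" .
    then have "2 dvd int q * int r * int s" by (rule dvd_trans[rotated]) simp
    then show False using oddD by simp
  qed
  consider (ev) "even g" | (od) "odd g" by blast
  then show ?thesis
  proof cases
    case ev
    obtain d1 d2 u v where dd: "d1 > 0" "d2 > 0" "u > 0" "v > 0" "d1 * d2 = int q * int r * int s"
      "g = d1 * u^2 - 1" "g = d2 * v^2 + 1" "g' = u * v"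
      "2 * g = d1 * u^2 + d2 * v^2" "d1 * u^2 - d2 * v^2 = 2"
      by (rule even_decomp2[OF nrm gpos g'pos ev Dpos])
    have dvd: "d1 dvd int q * int r * int s" using dd(5) by (metis dvd_triv_left)
    from div3[OF ipq ipr ips dvd dd(1)] show ?thesis
    proof (elim disjE)
    assume h: "d1 = 1"
    have hd2: "d2 = int q * int r * int s"
    proof -
      have "(1) * d2 = (1) * (int q * int r * int s)" using dd(5) h by (simp add: ac_simps)
      then show ?thesis using nz by simp
    qed
    have False by (rule excl_d2[where p=r and c=2, OF _ dd(10)]) (simp_all add: h hd2 Lsimps ee dvd_mult dvd_mult2)
    then show ?thesis ..
    next
    assume h: "d1 = int s"
    have hd2: "d2 = int q * int r"
    proof -
      have "(int s) * d2 = (int s) * (int q * int r)" using dd(5) h by (simp add: ac_simps)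
      then show ?thesis using nz by simp
    qed
    have False by (rule excl_d2[where p=r and c=2, OF _ dd(10)]) (simp_all add: h hd2 Lsimps ee dvd_mult dvd_mult2)
    then show ?thesis ..
    next
    assume h: "d1 = int r"
    have hd2: "d2 = int q * int s"
    proof -
      have "(int r) * d2 = (int r) * (int q * int s)" using dd(5) h by (simp add: ac_simps)
      then show ?thesis using nz by simp
    qed
    have False by (rule excl_d1[where p=r and c=2, OF _ dd(10) _ pr r2]) (simp_all add: h hd2 Lsimps ee dvd_mult dvd_mult2)
    then show ?thesis ..
    next
    assume h: "d1 = int r * int s"
    have hd2: "d2 = int q"
    proof -
      have "(int r * int s) * d2 = (int r * int s) * (int q)" using dd(5) h by (simp add: ac_simps)
      then show ?thesis using nz by simp
    qed
    have False by (rule excl_d1[where p=r and c=2, OF _ dd(10) _ pr r2]) (simp_all add: h hd2 Lsimps ee dvd_mult dvd_mult2)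
    then show ?thesis ..
    next
    assume h: "d1 = int q"
    have hd2: "d2 = int r * int s"
    proof -
      have "(int q) * d2 = (int q) * (int r * int s)" using dd(5) h by (simp add: ac_simps)
      then show ?thesis using nz by simp
    qed
    have False by (rule excl_d2[where p=r and c=2, OF _ dd(10)]) (simp_all add: h hd2 Lsimps ee dvd_mult dvd_mult2)
    then show ?thesis ..
    next
    assume h: "d1 = int q * int s"
    have hd2: "d2 = int r"
    proof -
      have "(int q * int s) * d2 = (int q * int s) * (int r)" using dd(5) h by (simp add: ac_simps)
      then show ?thesis using nz by simp
    qed
    have False by (rule excl_d2[where p=r and c=2, OF _ dd(10)]) (simp_all add: h hd2 Lsimps ee dvd_mult dvd_mult2)
    then show ?thesis ..
    next
    assume h: "d1 = int q * int r"
    have hd2: "d2 = int s"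
    proof -
      have "(int q * int r) * d2 = (int q * int r) * (int s)" using dd(5) h by (simp add: ac_simps)
      then show ?thesis using nz by simp
    qed
    have False by (rule excl_d1[where p=r and c=2, OF _ dd(10) _ pr r2]) (simp_all add: h hd2 Lsimps ee dvd_mult dvd_mult2)
    then show ?thesis ..
    next
    assume h: "d1 = int q * int r * int s"
    have hd2: "d2 = 1"
    proof -
      have "(int q * int r * int s) * d2 = (int q * int r * int s) * (1)" using dd(5) h by (simp add: ac_simps)
      then show ?thesis using nz by simp
    qed
    have False by (rule excl_d1[where p=r and c=2, OF _ dd(10) _ pr r2]) (simp_all add: h hd2 Lsimps ee dvd_mult dvd_mult2)
    then show ?thesis ..
    qed
  next
    case od
    obtain d1 d2 u v where dd: "d1 > 0" "d2 > 0" "u > 0" "v > 0" "d1 * d2 = int q * int r * int s"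
      "g = 2 * d1 * u^2 - 1" "g = 2 * d2 * v^2 + 1" "g' = 2 * u * v"
      "g = d1 * u^2 + d2 * v^2" "d1 * u^2 - d2 * v^2 = 1"
      by (rule odd_decomp2[OF nrm gpos g'pos od Dpos u4])
    have dvd: "d1 dvd int q * int r * int s" using dd(5) by (metis dvd_triv_left)
    from div3[OF ipq ipr ips dvd dd(1)] show ?thesis
    proof (elim disjE)
    assume h: "d1 = 1"
    have hd2: "d2 = int q * int r * int s"
    proof -
      have "(1) * d2 = (1) * (int q * int r * int s)" using dd(5) h by (simp add: ac_simps)
      then show ?thesis using nz by simp
    qed
    have False
    proof (rule min_contra[where D="int q * int r * int s" and u=u and v=v and g=g and g'=g', OF Dpos dd(3) dd(4) _ _ _ minim])
      show "u^2 - (int q * int r * int s) * v^2 = 1" using h hd2 dd(10) by simp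
      show "g = u^2 + (int q * int r * int s) * v^2" using h hd2 dd(9) by simp
      show "g' = 2 * u * v" by (rule dd(8))
    qed
    then show ?thesis ..
    next
    assume h: "d1 = int s"
    have hd2: "d2 = int q * int r"
    proof -
      have "(int s) * d2 = (int s) * (int q * int r)" using dd(5) h by (simp add: ac_simps)
      then show ?thesis using nz by simp
    qed
    have nA: "\<not> is_nat_square (2 * int q * (g - 1))"
    proof -
      have eq: "2 * int q * (g - 1) = int r * (1) * (2 * int q * v)^2" using h hd2 dd(7) by (simp add: algebra_simps power2_eq_square)
      have "\<not> is_nat_square (int r * (1) * (2 * int q * v)^2)"
        by (rule nat_sq_no[OF ipr]) (use ndvd nz dd(3) dd(4) ipq ipr ips in \<open>simp_all add: prime_dvd_mult_iff\<close>)
      then show ?thesis unfolding eq .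
    qed
    have nB: "\<not> is_nat_square (2 * int r * (g + 1))"
    proof -
      have eq: "2 * int r * (g + 1) = int s * (int r) * (2 * u)^2" using h hd2 dd(6) by (simp add: algebra_simps power2_eq_square)
      have "\<not> is_nat_square (int s * (int r) * (2 * u)^2)"
        by (rule nat_sq_no[OF ips]) (use ndvd nz dd(3) dd(4) ipq ipr ips in \<open>simp_all add: prime_dvd_mult_iff\<close>)
      then show ?thesis unfolding eq .
    qed
    have fC: "is_nat_square (2 * int s * (g + 1))"
    proof -
      have "2 * int s * (g + 1) = (2 * int s * u)^2" using h hd2 dd(6) by (simp add: algebra_simps power2_eq_square)
      then show ?thesis by (simp only: nat_sq_yes)
    qed
    have sq: "sqrt (real 1 * eps) = of_int (u) * sqrt (real (s)) + of_int (v) * sqrt (real (q*r))"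
    proof (rule sqrt_rep[where Dn="q*r*s"])
      show "(u) \<ge> 0" using dd(3) dd(4) by simp
      show "(v) \<ge> 0" using dd(3) dd(4) by simp
      show "(s) * (q*r) = q*r*s" by (simp add: ac_simps)
      show "int 1 * g = (u)^2 * int (s) + (v)^2 * int (q*r)" using h hd2 dd(9) by (simp add: algebra_simps power2_eq_square)
      show "int 1 * g' = 2 * (u) * (v)" using dd(8) by (simp add: algebra_simps)
      show "eps = of_int g + of_int g' * sqrt (real (q*r*s))" by (rule eps)
    qed
    have e10: "(int s) * u^2 - (int q * int r) * v^2 = 1" using h hd2 dd(10) by simp
    have rr: "int s * u^2 - int (q*r) * v^2 = 1 * ((int s) * u^2 - (int q * int r) * v^2)" by (simp add: algebra_simps power2_eq_square)
    have nm: "1 = int s * u^2 - int (q*r) * v^2" unfolding rr e10 by simp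
    show ?thesis
      unfolding Let_def
      apply (intro conjI)
      subgoal using nA nB fC by blast
      apply (rule exI[of _ "u"], rule exI[of _ "v"])
      using nA nB fC sq nm by simp
    next
    assume h: "d1 = int r"
    have hd2: "d2 = int q * int s"
    proof -
      have "(int r) * d2 = (int r) * (int q * int s)" using dd(5) h by (simp add: ac_simps)
      then show ?thesis using nz by simp
    qed
    have nA: "\<not> is_nat_square (2 * int q * (g - 1))"
    proof -
      have eq: "2 * int q * (g - 1) = int s * (1) * (2 * int q * v)^2" using h hd2 dd(7) by (simp add: algebra_simps power2_eq_square)
      have "\<not> is_nat_square (int s * (1) * (2 * int q * v)^2)"
        by (rule nat_sq_no[OF ips]) (use ndvd nz dd(3) dd(4) ipq ipr ips in \<open>simp_all add: prime_dvd_mult_iff\<close>)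
      then show ?thesis unfolding eq .
    qed
    have fB: "is_nat_square (2 * int r * (g + 1))"
    proof -
      have "2 * int r * (g + 1) = (2 * int r * u)^2" using h hd2 dd(6) by (simp add: algebra_simps power2_eq_square)
      then show ?thesis by (simp only: nat_sq_yes)
    qed
    have nC: "\<not> is_nat_square (2 * int s * (g + 1))"
    proof -
      have eq: "2 * int s * (g + 1) = int r * (int s) * (2 * u)^2" using h hd2 dd(6) by (simp add: algebra_simps power2_eq_square)
      have "\<not> is_nat_square (int r * (int s) * (2 * u)^2)"
        by (rule nat_sq_no[OF ipr]) (use ndvd nz dd(3) dd(4) ipq ipr ips in \<open>simp_all add: prime_dvd_mult_iff\<close>)
      then show ?thesis unfolding eq .
    qed
    have sq: "sqrt (real 1 * eps) = of_int (u) * sqrt (real (r)) + of_int (v) * sqrt (real (q*s))"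
    proof (rule sqrt_rep[where Dn="q*r*s"])
      show "(u) \<ge> 0" using dd(3) dd(4) by simp
      show "(v) \<ge> 0" using dd(3) dd(4) by simp
      show "(r) * (q*s) = q*r*s" by (simp add: ac_simps)
      show "int 1 * g = (u)^2 * int (r) + (v)^2 * int (q*s)" using h hd2 dd(9) by (simp add: algebra_simps power2_eq_square)
      show "int 1 * g' = 2 * (u) * (v)" using dd(8) by (simp add: algebra_simps)
      show "eps = of_int g + of_int g' * sqrt (real (q*r*s))" by (rule eps)
    qed
    have e10: "(int r) * u^2 - (int q * int s) * v^2 = 1" using h hd2 dd(10) by simp
    have rr: "int r * u^2 - int (q*s) * v^2 = 1 * ((int r) * u^2 - (int q * int s) * v^2)" by (simp add: algebra_simps power2_eq_square)
    have nm: "1 = int r * u^2 - int (q*s) * v^2" unfolding rr e10 by simp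
    show ?thesis
      unfolding Let_def
      apply (intro conjI)
      subgoal using nA fB nC by blast
      apply (rule exI[of _ "u"], rule exI[of _ "v"])
      using nA fB nC sq nm by simp
    next
    assume h: "d1 = int r * int s"
    have hd2: "d2 = int q"
    proof -
      have "(int r * int s) * d2 = (int r * int s) * (int q)" using dd(5) h by (simp add: ac_simps)
      then show ?thesis using nz by simp
    qed
    have fA: "is_nat_square (2 * int q * (g - 1))"
    proof -
      have "2 * int q * (g - 1) = (2 * int q * v)^2" using h hd2 dd(7) by (simp add: algebra_simps power2_eq_square)
      then show ?thesis by (simp only: nat_sq_yes)
    qed
    have nB: "\<not> is_nat_square (2 * int r * (g + 1))"
    proof -
      have eq: "2 * int r * (g + 1) = int s * (1) * (2 * int r * u)^2" using h hd2 dd(6) by (simp add: algebra_simps power2_eq_square)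
      have "\<not> is_nat_square (int s * (1) * (2 * int r * u)^2)"
        by (rule nat_sq_no[OF ips]) (use ndvd nz dd(3) dd(4) ipq ipr ips in \<open>simp_all add: prime_dvd_mult_iff\<close>)
      then show ?thesis unfolding eq .
    qed
    have nC: "\<not> is_nat_square (2 * int s * (g + 1))"
    proof -
      have eq: "2 * int s * (g + 1) = int r * (1) * (2 * int s * u)^2" using h hd2 dd(6) by (simp add: algebra_simps power2_eq_square)
      have "\<not> is_nat_square (int r * (1) * (2 * int s * u)^2)"
        by (rule nat_sq_no[OF ipr]) (use ndvd nz dd(3) dd(4) ipq ipr ips in \<open>simp_all add: prime_dvd_mult_iff\<close>)
      then show ?thesis unfolding eq .
    qed
    have sq: "sqrt (real 1 * eps) = of_int (v) * sqrt (real (q)) + of_int (u) * sqrt (real (r*s))"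
    proof (rule sqrt_rep[where Dn="q*r*s"])
      show "(v) \<ge> 0" using dd(3) dd(4) by simp
      show "(u) \<ge> 0" using dd(3) dd(4) by simp
      show "(q) * (r*s) = q*r*s" by (simp add: ac_simps)
      show "int 1 * g = (v)^2 * int (q) + (u)^2 * int (r*s)" using h hd2 dd(9) by (simp add: algebra_simps power2_eq_square)
      show "int 1 * g' = 2 * (v) * (u)" using dd(8) by (simp add: algebra_simps)
      show "eps = of_int g + of_int g' * sqrt (real (q*r*s))" by (rule eps)
    qed
    have e10: "(int r * int s) * u^2 - (int q) * v^2 = 1" using h hd2 dd(10) by simp
    have rr: "- int q * v^2 + int (r*s) * u^2 = 1 * ((int r * int s) * u^2 - (int q) * v^2)" by (simp add: algebra_simps power2_eq_square)
    have nm: "1 = - int q * v^2 + int (r*s) * u^2" unfolding rr e10 by simp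
    show ?thesis
      unfolding Let_def
      apply (intro conjI)
      subgoal using fA nB nC by blast
      apply (rule exI[of _ "v"], rule exI[of _ "u"])
      using fA nB nC sq nm by simp
    next
    assume h: "d1 = int q"
    have hd2: "d2 = int r * int s"
    proof -
      have "(int q) * d2 = (int q) * (int r * int s)" using dd(5) h by (simp add: ac_simps)
      then show ?thesis using nz by simp
    qed
    have False by (rule excl_d1[where p=q and c=1, OF _ dd(10) _ pq q2]) (simp_all add: h hd2 Lsimps ee dvd_mult dvd_mult2)
    then show ?thesis ..
    next
    assume h: "d1 = int q * int s"
    have hd2: "d2 = int r"
    proof -
      have "(int q * int s) * d2 = (int q * int s) * (int r)" using dd(5) h by (simp add: ac_simps)
      then show ?thesis using nz by simp
    qed
    have False by (rule excl_d1[where p=q and c=1, OF _ dd(10) _ pq q2]) (simp_all add: h hd2 Lsimps ee dvd_mult dvd_mult2)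
    then show ?thesis ..
    next
    assume h: "d1 = int q * int r"
    have hd2: "d2 = int s"
    proof -
      have "(int q * int r) * d2 = (int q * int r) * (int s)" using dd(5) h by (simp add: ac_simps)
      then show ?thesis using nz by simp
    qed
    have False by (rule excl_d1[where p=q and c=1, OF _ dd(10) _ pq q2]) (simp_all add: h hd2 Lsimps ee dvd_mult dvd_mult2)
    then show ?thesis ..
    next
    assume h: "d1 = int q * int r * int s"
    have hd2: "d2 = 1"
    proof -
      have "(int q * int r * int s) * d2 = (int q * int r * int s) * (1)" using dd(5) h by (simp add: ac_simps)
      then show ?thesis using nz by simp
    qed
    have False by (rule excl_d1[where p=q and c=1, OF _ dd(10) _ pq q2]) (simp_all add: h hd2 Lsimps ee dvd_mult dvd_mult2)
    then show ?thesis ..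
    qed
  qed
qed

lemma (in qrs) P1_eta2:
  fixes g g' :: int and eps :: real
  assumes ee: "e = -1"
    and nrm: "g^2 - (2 * int q * int r * int s) * g'^2 = 1" and gpos: "g > 0" and g'pos: "g' > 0"
    and minim: "\<forall>m n :: int. m > 0 \<longrightarrow> n > 0 \<longrightarrow> m^2 - (2 * int q * int r * int s) * n^2 = 1 \<longrightarrow>
       of_int g + of_int g' * sqrt (real_of_int (2 * int q * int r * int s)) \<le> of_int m + of_int n * sqrt (real_of_int (2 * int q * int r * int s))"
    and eps: "eps = of_int g + of_int g' * sqrt (real (2*q*r*s))"
  shows "let A = is_nat_square (int q * (g - 1)); B = is_nat_square (2 * int r * (g - 1)); C = is_nat_square (2 * int s * (g - 1)) in ((A \<and> \<not> B \<and> \<not> C) \<or> (\<not> A \<and> B \<and> \<not> C) \<or> (\<not> A \<and> \<not> B \<and> C)) \<and> (\<exists>\<gamma>1 \<gamma>2 :: int. (A \<longrightarrow> sqrt (2 * eps) = of_int \<gamma>1 * sqrt (real q) + of_int \<gamma>2 * sqrt (real (2*r*s)) \<and> 2 = - int q * \<gamma>1^2 + int (2*r*s) * \<gamma>2^2) \<and> (B \<longrightarrow> sqrt (2 * eps) = of_int \<gamma>1 * sqrt (real (2*r)) + of_int \<gamma>2 * sqrt (real (q*s)) \<and> 2 = - int (2*r) * \<gamma>1^2 + int (q*s) * \<gamma>2^2) \<and> (C \<longrightarrow> sqrt (2 * eps) = of_int \<gamma>1 * sqrt (real (2*s)) + of_int \<gamma>2 * sqrt (real (q*r)) \<and> 2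 = - int (2*s) * \<gamma>1^2 + int (q*r) * \<gamma>2^2))"
proof -
  have Dpos: "2 * int q * int r * int s > 0" using nz q2 r2 s2 by simp
  have oddD: "odd (int q * int r * int s)" using odd_prod3[OF pq pr ps q2 r2 s2] .
  have u4: "(2 * int q * int r * int s) mod 4 \<noteq> 0"
  proof
    assume "(2 * int q * int r * int s) mod 4 = 0"
    then have "4 dvd 2 * int q * int r * int s" by (simp add: dvd_eq_mod_eq_0)
    then have "4 dvd 2 * int q * int r * int s" .
    then obtain t where "2 * (int q * int r * int s) = 4 * t" by (auto simp: mult.assoc)
    then have "int q * int r * int s = 2 * t" by simp
    then have "2 dvd int q * int r * int s" by simp
    then show False using oddD by simp
  qed
  have od: "odd g"
  proof -
    have "g^2 = 1 + 2 * (int q * int r * int s * g'^2)" using nrm by (simp add: algebra_simps)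
    then have "odd (g^2)" by simp
    then show ?thesis by simp
  qed
  show ?thesis
  proof -
    obtain d1 d2 u v where dd: "d1 > 0" "d2 > 0" "u > 0" "v > 0" "d1 * d2 = 2 * int q * int r * int s"
      "g = 2 * d1 * u^2 - 1" "g = 2 * d2 * v^2 + 1" "g' = 2 * u * v"
      "g = d1 * u^2 + d2 * v^2" "d1 * u^2 - d2 * v^2 = 1"
      by (rule odd_decomp2[OF nrm gpos g'pos od Dpos u4])
    have dvd: "d1 dvd 2 * int q * int r * int s" using dd(5) by (metis dvd_triv_left)
    from div4[OF ip2 ipq ipr ips dvd dd(1)] show ?thesis
    proof (elim disjE)
    assume h: "d1 = 1"
    have hd2: "d2 = 2 * int q * int r * int s"
    proof -
      have "(1) * d2 = (1) * (2 * int q * int r * int s)" using dd(5) h by (simp add: ac_simps)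
      then show ?thesis using nz by simp
    qed
    have False
    proof (rule min_contra[where D="2 * int q * int r * int s" and u=u and v=v and g=g and g'=g', OF Dpos dd(3) dd(4) _ _ _ minim])
      show "u^2 - (2 * int q * int r * int s) * v^2 = 1" using h hd2 dd(10) by simp
      show "g = u^2 + (2 * int q * int r * int s) * v^2" using h hd2 dd(9) by simp
      show "g' = 2 * u * v" by (rule dd(8))
    qed
    then show ?thesis ..
    next
    assume h: "d1 = int s"
    have hd2: "d2 = 2 * int q * int r"
    proof -
      have "(int s) * d2 = (int s) * (2 * int q * int r)" using dd(5) h by (simp add: ac_simps)
      then show ?thesis using nz by simp
    qed
    have False by (rule excl_d2[where p=q and c=1, OF _ dd(10)]) (simp_all add: h hd2 Lsimps ee dvd_mult dvd_mult2)
    then show ?thesis ..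
    next
    assume h: "d1 = int r"
    have hd2: "d2 = 2 * int q * int s"
    proof -
      have "(int r) * d2 = (int r) * (2 * int q * int s)" using dd(5) h by (simp add: ac_simps)
      then show ?thesis using nz by simp
    qed
    have False by (rule excl_d2[where p=q and c=1, OF _ dd(10)]) (simp_all add: h hd2 Lsimps ee dvd_mult dvd_mult2)
    then show ?thesis ..
    next
    assume h: "d1 = int r * int s"
    have hd2: "d2 = 2 * int q"
    proof -
      have "(int r * int s) * d2 = (int r * int s) * (2 * int q)" using dd(5) h by (simp add: ac_simps)
      then show ?thesis using nz by simp
    qed
    have fA: "is_nat_square (int q * (g - 1))"
    proof -
      have "int q * (g - 1) = (2 * int q * v)^2" using h hd2 dd(7) by (simp add: algebra_simps power2_eq_square)
      then show ?thesis by (simp only: nat_sq_yes)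
    qed
    have nB: "\<not> is_nat_square (2 * int r * (g - 1))"
    proof -
      have eq: "2 * int r * (g - 1) = int r * (2 * int q) * (2 * v)^2" using h hd2 dd(7) by (simp add: algebra_simps power2_eq_square)
      have "\<not> is_nat_square (int r * (2 * int q) * (2 * v)^2)"
        by (rule nat_sq_no[OF ipr]) (use ndvd nz dd(3) dd(4) ipq ipr ips in \<open>simp_all add: prime_dvd_mult_iff\<close>)
      then show ?thesis unfolding eq .
    qed
    have nC: "\<not> is_nat_square (2 * int s * (g - 1))"
    proof -
      have eq: "2 * int s * (g - 1) = int s * (2 * int q) * (2 * v)^2" using h hd2 dd(7) by (simp add: algebra_simps power2_eq_square)
      have "\<not> is_nat_square (int s * (2 * int q) * (2 * v)^2)"
        by (rule nat_sq_no[OF ips]) (use ndvd nz dd(3) dd(4) ipq ipr ips in \<open>simp_all add: prime_dvd_mult_iff\<close>)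
      then show ?thesis unfolding eq .
    qed
    have sq: "sqrt (real 2 * eps) = of_int (2 * v) * sqrt (real (q)) + of_int (u) * sqrt (real (2*r*s))"
    proof (rule sqrt_rep[where Dn="2*q*r*s"])
      show "(2 * v) \<ge> 0" using dd(3) dd(4) by simp
      show "(u) \<ge> 0" using dd(3) dd(4) by simp
      show "(q) * (2*r*s) = 2*q*r*s" by (simp add: ac_simps)
      show "int 2 * g = (2 * v)^2 * int (q) + (u)^2 * int (2*r*s)" using h hd2 dd(9) by (simp add: algebra_simps power2_eq_square)
      show "int 2 * g' = 2 * (2 * v) * (u)" using dd(8) by (simp add: algebra_simps)
      show "eps = of_int g + of_int g' * sqrt (real (2*q*r*s))" by (rule eps)
    qed
    have e10: "(int r * int s) * u^2 - (2 * int q) * v^2 = 1" using h hd2 dd(10) by simp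
    have rr: "- int q * (2 * v)^2 + int (2*r*s) * u^2 = 2 * ((int r * int s) * u^2 - (2 * int q) * v^2)" by (simp add: algebra_simps power2_eq_square)
    have nm: "2 = - int q * (2 * v)^2 + int (2*r*s) * u^2" unfolding rr e10 by simp
    show ?thesis
      unfolding Let_def
      apply (intro conjI)
      subgoal using fA nB nC by blast
      apply (rule exI[of _ "2 * v"], rule exI[of _ "u"])
      using fA nB nC sq nm by simp
    next
    assume h: "d1 = int q"
    have hd2: "d2 = 2 * int r * int s"
    proof -
      have "(int q) * d2 = (int q) * (2 * int r * int s)" using dd(5) h by (simp add: ac_simps)
      then show ?thesis using nz by simp
    qed
    have False by (rule excl_d2[where p=r and c=1, OF _ dd(10)]) (simp_all add: h hd2 Lsimps ee dvd_mult dvd_mult2)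
    then show ?thesis ..
    next
    assume h: "d1 = int q * int s"
    have hd2: "d2 = 2 * int r"
    proof -
      have "(int q * int s) * d2 = (int q * int s) * (2 * int r)" using dd(5) h by (simp add: ac_simps)
      then show ?thesis using nz by simp
    qed
    have False by (rule excl_d2[where p=r and c=1, OF _ dd(10)]) (simp_all add: h hd2 Lsimps ee dvd_mult dvd_mult2)
    then show ?thesis ..
    next
    assume h: "d1 = int q * int r"
    have hd2: "d2 = 2 * int s"
    proof -
      have "(int q * int r) * d2 = (int q * int r) * (2 * int s)" using dd(5) h by (simp add: ac_simps)
      then show ?thesis using nz by simp
    qed
    have False by (rule excl_d1[where p=r and c=1, OF _ dd(10) _ pr r2]) (simp_all add: h hd2 Lsimps ee dvd_mult dvd_mult2)
    then show ?thesis ..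
    next
    assume h: "d1 = int q * int r * int s"
    have hd2: "d2 = 2"
    proof -
      have "(int q * int r * int s) * d2 = (int q * int r * int s) * (2)" using dd(5) h by (simp add: ac_simps)
      then show ?thesis using nz by simp
    qed
    have False by (rule excl_d1[where p=r and c=1, OF _ dd(10) _ pr r2]) (simp_all add: h hd2 Lsimps ee dvd_mult dvd_mult2)
    then show ?thesis ..
    next
    assume h: "d1 = 2"
    have hd2: "d2 = int q * int r * int s"
    proof -
      have "(2) * d2 = (2) * (int q * int r * int s)" using dd(5) h by (simp add: ac_simps)
      then show ?thesis using nz by simp
    qed
    have False by (rule excl_d2[where p=r and c=1, OF _ dd(10)]) (simp_all add: h hd2 Lsimps ee dvd_mult dvd_mult2)
    then show ?thesis ..
    next
    assume h: "d1 = 2 * int s"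
    have hd2: "d2 = int q * int r"
    proof -
      have "(2 * int s) * d2 = (2 * int s) * (int q * int r)" using dd(5) h by (simp add: ac_simps)
      then show ?thesis using nz by simp
    qed
    have False by (rule excl_d2[where p=r and c=1, OF _ dd(10)]) (simp_all add: h hd2 Lsimps ee dvd_mult dvd_mult2)
    then show ?thesis ..
    next
    assume h: "d1 = 2 * int r"
    have hd2: "d2 = int q * int s"
    proof -
      have "(2 * int r) * d2 = (2 * int r) * (int q * int s)" using dd(5) h by (simp add: ac_simps)
      then show ?thesis using nz by simp
    qed
    have False by (rule excl_d1[where p=r and c=1, OF _ dd(10) _ pr r2]) (simp_all add: h hd2 Lsimps ee dvd_mult dvd_mult2)
    then show ?thesis ..
    next
    assume h: "d1 = 2 * int r * int s"
    have hd2: "d2 = int q"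
    proof -
      have "(2 * int r * int s) * d2 = (2 * int r * int s) * (int q)" using dd(5) h by (simp add: ac_simps)
      then show ?thesis using nz by simp
    qed
    have False by (rule excl_d1[where p=r and c=1, OF _ dd(10) _ pr r2]) (simp_all add: h hd2 Lsimps ee dvd_mult dvd_mult2)
    then show ?thesis ..
    next
    assume h: "d1 = 2 * int q"
    have hd2: "d2 = int r * int s"
    proof -
      have "(2 * int q) * d2 = (2 * int q) * (int r * int s)" using dd(5) h by (simp add: ac_simps)
      then show ?thesis using nz by simp
    qed
    have False by (rule excl_d1[where p=q and c=1, OF _ dd(10) _ pq q2]) (simp_all add: h hd2 Lsimps ee dvd_mult dvd_mult2)
    then show ?thesis ..
    next
    assume h: "d1 = 2 * int q * int s"
    have hd2: "d2 = int r"
    proof -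
      have "(2 * int q * int s) * d2 = (2 * int q * int s) * (int r)" using dd(5) h by (simp add: ac_simps)
      then show ?thesis using nz by simp
    qed
    have nA: "\<not> is_nat_square (int q * (g - 1))"
    proof -
      have eq: "int q * (g - 1) = int q * (2 * int r) * (v)^2" using h hd2 dd(7) by (simp add: algebra_simps power2_eq_square)
      have "\<not> is_nat_square (int q * (2 * int r) * (v)^2)"
        by (rule nat_sq_no[OF ipq]) (use ndvd nz dd(3) dd(4) ipq ipr ips in \<open>simp_all add: prime_dvd_mult_iff\<close>)
      then show ?thesis unfolding eq .
    qed
    have fB: "is_nat_square (2 * int r * (g - 1))"
    proof -
      have "2 * int r * (g - 1) = (2 * int r * v)^2" using h hd2 dd(7) by (simp add: algebra_simps power2_eq_square)
      then show ?thesis by (simp only: nat_sq_yes)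
    qed
    have nC: "\<not> is_nat_square (2 * int s * (g - 1))"
    proof -
      have eq: "2 * int s * (g - 1) = int s * (int r) * (2 * v)^2" using h hd2 dd(7) by (simp add: algebra_simps power2_eq_square)
      have "\<not> is_nat_square (int s * (int r) * (2 * v)^2)"
        by (rule nat_sq_no[OF ips]) (use ndvd nz dd(3) dd(4) ipq ipr ips in \<open>simp_all add: prime_dvd_mult_iff\<close>)
      then show ?thesis unfolding eq .
    qed
    have sq: "sqrt (real 2 * eps) = of_int (v) * sqrt (real (2*r)) + of_int (2 * u) * sqrt (real (q*s))"
    proof (rule sqrt_rep[where Dn="2*q*r*s"])
      show "(v) \<ge> 0" using dd(3) dd(4) by simp
      show "(2 * u) \<ge> 0" using dd(3) dd(4) by simp
      show "(2*r) * (q*s) = 2*q*r*s" by (simp add: ac_simps)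
      show "int 2 * g = (v)^2 * int (2*r) + (2 * u)^2 * int (q*s)" using h hd2 dd(9) by (simp add: algebra_simps power2_eq_square)
      show "int 2 * g' = 2 * (v) * (2 * u)" using dd(8) by (simp add: algebra_simps)
      show "eps = of_int g + of_int g' * sqrt (real (2*q*r*s))" by (rule eps)
    qed
    have e10: "(2 * int q * int s) * u^2 - (int r) * v^2 = 1" using h hd2 dd(10) by simp
    have rr: "- int (2*r) * v^2 + int (q*s) * (2 * u)^2 = 2 * ((2 * int q * int s) * u^2 - (int r) * v^2)" by (simp add: algebra_simps power2_eq_square)
    have nm: "2 = - int (2*r) * v^2 + int (q*s) * (2 * u)^2" unfolding rr e10 by simp
    show ?thesis
      unfolding Let_def
      apply (intro conjI)
      subgoal using nA fB nC by blast
      apply (rule exI[of _ "v"], rule exI[of _ "2 * u"])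
      using nA fB nC sq nm by simp
    next
    assume h: "d1 = 2 * int q * int r"
    have hd2: "d2 = int s"
    proof -
      have "(2 * int q * int r) * d2 = (2 * int q * int r) * (int s)" using dd(5) h by (simp add: ac_simps)
      then show ?thesis using nz by simp
    qed
    have nA: "\<not> is_nat_square (int q * (g - 1))"
    proof -
      have eq: "int q * (g - 1) = int q * (2 * int s) * (v)^2" using h hd2 dd(7) by (simp add: algebra_simps power2_eq_square)
      have "\<not> is_nat_square (int q * (2 * int s) * (v)^2)"
        by (rule nat_sq_no[OF ipq]) (use ndvd nz dd(3) dd(4) ipq ipr ips in \<open>simp_all add: prime_dvd_mult_iff\<close>)
      then show ?thesis unfolding eq .
    qed
    have nB: "\<not> is_nat_square (2 * int r * (g - 1))"
    proof -
      have eq: "2 * int r * (g - 1) = int r * (int s) * (2 * v)^2" using h hd2 dd(7) by (simp add: algebra_simps power2_eq_square)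
      have "\<not> is_nat_square (int r * (int s) * (2 * v)^2)"
        by (rule nat_sq_no[OF ipr]) (use ndvd nz dd(3) dd(4) ipq ipr ips in \<open>simp_all add: prime_dvd_mult_iff\<close>)
      then show ?thesis unfolding eq .
    qed
    have fC: "is_nat_square (2 * int s * (g - 1))"
    proof -
      have "2 * int s * (g - 1) = (2 * int s * v)^2" using h hd2 dd(7) by (simp add: algebra_simps power2_eq_square)
      then show ?thesis by (simp only: nat_sq_yes)
    qed
    have sq: "sqrt (real 2 * eps) = of_int (v) * sqrt (real (2*s)) + of_int (2 * u) * sqrt (real (q*r))"
    proof (rule sqrt_rep[where Dn="2*q*r*s"])
      show "(v) \<ge> 0" using dd(3) dd(4) by simp
      show "(2 * u) \<ge> 0" using dd(3) dd(4) by simp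
      show "(2*s) * (q*r) = 2*q*r*s" by (simp add: ac_simps)
      show "int 2 * g = (v)^2 * int (2*s) + (2 * u)^2 * int (q*r)" using h hd2 dd(9) by (simp add: algebra_simps power2_eq_square)
      show "int 2 * g' = 2 * (v) * (2 * u)" using dd(8) by (simp add: algebra_simps)
      show "eps = of_int g + of_int g' * sqrt (real (2*q*r*s))" by (rule eps)
    qed
    have e10: "(2 * int q * int r) * u^2 - (int s) * v^2 = 1" using h hd2 dd(10) by simp
    have rr: "- int (2*s) * v^2 + int (q*r) * (2 * u)^2 = 2 * ((2 * int q * int r) * u^2 - (int s) * v^2)" by (simp add: algebra_simps power2_eq_square)
    have nm: "2 = - int (2*s) * v^2 + int (q*r) * (2 * u)^2" unfolding rr e10 by simp
    show ?thesis
      unfolding Let_def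
      apply (intro conjI)
      subgoal using nA nB fC by blast
      apply (rule exI[of _ "v"], rule exI[of _ "2 * u"])
      using nA nB fC sq nm by simp
    next
    assume h: "d1 = 2 * int q * int r * int s"
    have hd2: "d2 = 1"
    proof -
      have "(2 * int q * int r * int s) * d2 = (2 * int q * int r * int s) * (1)" using dd(5) h by (simp add: ac_simps)
      then show ?thesis using nz by simp
    qed
    have False by (rule excl_d1[where p=q and c=1, OF _ dd(10) _ pq q2]) (simp_all add: h hd2 Lsimps ee dvd_mult dvd_mult2)
    then show ?thesis ..
    qed
  qed
qed

lemma (in qrs) P2_rho2:
  fixes g g' :: int and eps :: real
  assumes ee: "e = 1"
    and nrm: "g^2 - (2 * int q * int r * int s) * g'^2 = 1" and gpos: "g > 0" and g'pos: "g' > 0"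
    and minim: "\<forall>m n :: int. m > 0 \<longrightarrow> n > 0 \<longrightarrow> m^2 - (2 * int q * int r * int s) * n^2 = 1 \<longrightarrow>
       of_int g + of_int g' * sqrt (real_of_int (2 * int q * int r * int s)) \<le> of_int m + of_int n * sqrt (real_of_int (2 * int q * int r * int s))"
    and eps: "eps = of_int g + of_int g' * sqrt (real (2*q*r*s))"
  shows "let A = is_nat_square (2 * int q * (g + 1)); B = is_nat_square (2 * int q * (g - 1)) in ((A \<and> \<not> B) \<or> (\<not> A \<and> B)) \<and> (\<exists>y1 y2 :: int. (A \<longrightarrow> sqrt (2 * eps) = of_int y1 * sqrt (real (2*q)) + of_int y2 * sqrt (real (r*s)) \<and> 2 = int (2*q) * y1^2 - int (r*s) * y2^2) \<and> (B \<longrightarrow> sqrt (2 * eps) = of_int y1 * sqrt (real (2*q)) + of_int y2 * sqrt (real (r*s)) \<and> 2 = - int (2*q) * y1^2 + int (r*s) * y2^2))"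
proof -
  have Dpos: "2 * int q * int r * int s > 0" using nz q2 r2 s2 by simp
  have oddD: "odd (int q * int r * int s)" using odd_prod3[OF pq pr ps q2 r2 s2] .
  have u4: "(2 * int q * int r * int s) mod 4 \<noteq> 0"
  proof
    assume "(2 * int q * int r * int s) mod 4 = 0"
    then have "4 dvd 2 * int q * int r * int s" by (simp add: dvd_eq_mod_eq_0)
    then have "4 dvd 2 * int q * int r * int s" .
    then obtain t where "2 * (int q * int r * int s) = 4 * t" by (auto simp: mult.assoc)
    then have "int q * int r * int s = 2 * t" by simp
    then have "2 dvd int q * int r * int s" by simp
    then show False using oddD by simp
  qed
  have od: "odd g"
  proof -
    have "g^2 = 1 + 2 * (int q * int r * int s * g'^2)" using nrm by (simp add: algebra_simps)
    then have "odd (g^2)" by simp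
    then show ?thesis by simp
  qed
  show ?thesis
  proof -
    obtain d1 d2 u v where dd: "d1 > 0" "d2 > 0" "u > 0" "v > 0" "d1 * d2 = 2 * int q * int r * int s"
      "g = 2 * d1 * u^2 - 1" "g = 2 * d2 * v^2 + 1" "g' = 2 * u * v"
      "g = d1 * u^2 + d2 * v^2" "d1 * u^2 - d2 * v^2 = 1"
      by (rule odd_decomp2[OF nrm gpos g'pos od Dpos u4])
    have dvd: "d1 dvd 2 * int q * int r * int s" using dd(5) by (metis dvd_triv_left)
    from div4[OF ip2 ipq ipr ips dvd dd(1)] show ?thesis
    proof (elim disjE)
    assume h: "d1 = 1"
    have hd2: "d2 = 2 * int q * int r * int s"
    proof -
      have "(1) * d2 = (1) * (2 * int q * int r * int s)" using dd(5) h by (simp add: ac_simps)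
      then show ?thesis using nz by simp
    qed
    have False
    proof (rule min_contra[where D="2 * int q * int r * int s" and u=u and v=v and g=g and g'=g', OF Dpos dd(3) dd(4) _ _ _ minim])
      show "u^2 - (2 * int q * int r * int s) * v^2 = 1" using h hd2 dd(10) by simp
      show "g = u^2 + (2 * int q * int r * int s) * v^2" using h hd2 dd(9) by simp
      show "g' = 2 * u * v" by (rule dd(8))
    qed
    then show ?thesis ..
    next
    assume h: "d1 = int s"
    have hd2: "d2 = 2 * int q * int r"
    proof -
      have "(int s) * d2 = (int s) * (2 * int q * int r)" using dd(5) h by (simp add: ac_simps)
      then show ?thesis using nz by simp
    qed
    have False by (rule excl_d1[where p=s and c=1, OF _ dd(10) _ ps s2]) (simp_all add: h hd2 Lsimps ee dvd_mult dvd_mult2)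
    then show ?thesis ..
    next
    assume h: "d1 = int r"
    have hd2: "d2 = 2 * int q * int s"
    proof -
      have "(int r) * d2 = (int r) * (2 * int q * int s)" using dd(5) h by (simp add: ac_simps)
      then show ?thesis using nz by simp
    qed
    have False by (rule excl_d1[where p=r and c=1, OF _ dd(10) _ pr r2]) (simp_all add: h hd2 Lsimps ee dvd_mult dvd_mult2)
    then show ?thesis ..
    next
    assume h: "d1 = int r * int s"
    have hd2: "d2 = 2 * int q"
    proof -
      have "(int r * int s) * d2 = (int r * int s) * (2 * int q)" using dd(5) h by (simp add: ac_simps)
      then show ?thesis using nz by simp
    qed
    have False by (rule excl_d1[where p=r and c=1, OF _ dd(10) _ pr r2]) (simp_all add: h hd2 Lsimps ee dvd_mult dvd_mult2)
    then show ?thesis ..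
    next
    assume h: "d1 = int q"
    have hd2: "d2 = 2 * int r * int s"
    proof -
      have "(int q) * d2 = (int q) * (2 * int r * int s)" using dd(5) h by (simp add: ac_simps)
      then show ?thesis using nz by simp
    qed
    have fA: "is_nat_square (2 * int q * (g + 1))"
    proof -
      have "2 * int q * (g + 1) = (2 * int q * u)^2" using h hd2 dd(6) by (simp add: algebra_simps power2_eq_square)
      then show ?thesis by (simp only: nat_sq_yes)
    qed
    have nB: "\<not> is_nat_square (2 * int q * (g - 1))"
    proof -
      have eq: "2 * int q * (g - 1) = int q * (2 * int r * int s) * (2 * v)^2" using h hd2 dd(7) by (simp add: algebra_simps power2_eq_square)
      have "\<not> is_nat_square (int q * (2 * int r * int s) * (2 * v)^2)"
        by (rule nat_sq_no[OF ipq]) (use ndvd nz dd(3) dd(4) ipq ipr ips in \<open>simp_all add: prime_dvd_mult_iff\<close>)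
      then show ?thesis unfolding eq .
    qed
    have sq: "sqrt (real 2 * eps) = of_int (u) * sqrt (real (2*q)) + of_int (2 * v) * sqrt (real (r*s))"
    proof (rule sqrt_rep[where Dn="2*q*r*s"])
      show "(u) \<ge> 0" using dd(3) dd(4) by simp
      show "(2 * v) \<ge> 0" using dd(3) dd(4) by simp
      show "(2*q) * (r*s) = 2*q*r*s" by (simp add: ac_simps)
      show "int 2 * g = (u)^2 * int (2*q) + (2 * v)^2 * int (r*s)" using h hd2 dd(9) by (simp add: algebra_simps power2_eq_square)
      show "int 2 * g' = 2 * (u) * (2 * v)" using dd(8) by (simp add: algebra_simps)
      show "eps = of_int g + of_int g' * sqrt (real (2*q*r*s))" by (rule eps)
    qed
    have e10: "(int q) * u^2 - (2 * int r * int s) * v^2 = 1" using h hd2 dd(10) by simp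
    have rr: "int (2*q) * u^2 - int (r*s) * (2 * v)^2 = 2 * ((int q) * u^2 - (2 * int r * int s) * v^2)" by (simp add: algebra_simps power2_eq_square)
    have nm: "2 = int (2*q) * u^2 - int (r*s) * (2 * v)^2" unfolding rr e10 by simp
    show ?thesis
      unfolding Let_def
      apply (intro conjI)
      subgoal using fA nB by blast
      apply (rule exI[of _ "u"], rule exI[of _ "2 * v"])
      using fA nB sq nm by simp
    next
    assume h: "d1 = int q * int s"
    have hd2: "d2 = 2 * int r"
    proof -
      have "(int q * int s) * d2 = (int q * int s) * (2 * int r)" using dd(5) h by (simp add: ac_simps)
      then show ?thesis using nz by simp
    qed
    have False by (rule excl_d1[where p=s and c=1, OF _ dd(10) _ ps s2]) (simp_all add: h hd2 Lsimps ee dvd_mult dvd_mult2)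
    then show ?thesis ..
    next
    assume h: "d1 = int q * int r"
    have hd2: "d2 = 2 * int s"
    proof -
      have "(int q * int r) * d2 = (int q * int r) * (2 * int s)" using dd(5) h by (simp add: ac_simps)
      then show ?thesis using nz by simp
    qed
    have False by (rule excl_d1[where p=r and c=1, OF _ dd(10) _ pr r2]) (simp_all add: h hd2 Lsimps ee dvd_mult dvd_mult2)
    then show ?thesis ..
    next
    assume h: "d1 = int q * int r * int s"
    have hd2: "d2 = 2"
    proof -
      have "(int q * int r * int s) * d2 = (int q * int r * int s) * (2)" using dd(5) h by (simp add: ac_simps)
      then show ?thesis using nz by simp
    qed
    have False by (rule excl_d1[where p=r and c=1, OF _ dd(10) _ pr r2]) (simp_all add: h hd2 Lsimps ee dvd_mult dvd_mult2)
    then show ?thesis ..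
    next
    assume h: "d1 = 2"
    have hd2: "d2 = int q * int r * int s"
    proof -
      have "(2) * d2 = (2) * (int q * int r * int s)" using dd(5) h by (simp add: ac_simps)
      then show ?thesis using nz by simp
    qed
    have False by (rule excl_d2[where p=r and c=1, OF _ dd(10)]) (simp_all add: h hd2 Lsimps ee dvd_mult dvd_mult2)
    then show ?thesis ..
    next
    assume h: "d1 = 2 * int s"
    have hd2: "d2 = int q * int r"
    proof -
      have "(2 * int s) * d2 = (2 * int s) * (int q * int r)" using dd(5) h by (simp add: ac_simps)
      then show ?thesis using nz by simp
    qed
    have False by (rule excl_d2[where p=r and c=1, OF _ dd(10)]) (simp_all add: h hd2 Lsimps ee dvd_mult dvd_mult2)
    then show ?thesis ..
    next
    assume h: "d1 = 2 * int r"
    have hd2: "d2 = int q * int s"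
    proof -
      have "(2 * int r) * d2 = (2 * int r) * (int q * int s)" using dd(5) h by (simp add: ac_simps)
      then show ?thesis using nz by simp
    qed
    have False by (rule excl_d2[where p=s and c=1, OF _ dd(10)]) (simp_all add: h hd2 Lsimps ee dvd_mult dvd_mult2)
    then show ?thesis ..
    next
    assume h: "d1 = 2 * int r * int s"
    have hd2: "d2 = int q"
    proof -
      have "(2 * int r * int s) * d2 = (2 * int r * int s) * (int q)" using dd(5) h by (simp add: ac_simps)
      then show ?thesis using nz by simp
    qed
    have nA: "\<not> is_nat_square (2 * int q * (g + 1))"
    proof -
      have eq: "2 * int q * (g + 1) = int q * (2 * int r * int s) * (2 * u)^2" using h hd2 dd(6) by (simp add: algebra_simps power2_eq_square)
      have "\<not> is_nat_square (int q * (2 * int r * int s) * (2 * u)^2)"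
        by (rule nat_sq_no[OF ipq]) (use ndvd nz dd(3) dd(4) ipq ipr ips in \<open>simp_all add: prime_dvd_mult_iff\<close>)
      then show ?thesis unfolding eq .
    qed
    have fB: "is_nat_square (2 * int q * (g - 1))"
    proof -
      have "2 * int q * (g - 1) = (2 * int q * v)^2" using h hd2 dd(7) by (simp add: algebra_simps power2_eq_square)
      then show ?thesis by (simp only: nat_sq_yes)
    qed
    have sq: "sqrt (real 2 * eps) = of_int (v) * sqrt (real (2*q)) + of_int (2 * u) * sqrt (real (r*s))"
    proof (rule sqrt_rep[where Dn="2*q*r*s"])
      show "(v) \<ge> 0" using dd(3) dd(4) by simp
      show "(2 * u) \<ge> 0" using dd(3) dd(4) by simp
      show "(2*q) * (r*s) = 2*q*r*s" by (simp add: ac_simps)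
      show "int 2 * g = (v)^2 * int (2*q) + (2 * u)^2 * int (r*s)" using h hd2 dd(9) by (simp add: algebra_simps power2_eq_square)
      show "int 2 * g' = 2 * (v) * (2 * u)" using dd(8) by (simp add: algebra_simps)
      show "eps = of_int g + of_int g' * sqrt (real (2*q*r*s))" by (rule eps)
    qed
    have e10: "(2 * int r * int s) * u^2 - (int q) * v^2 = 1" using h hd2 dd(10) by simp
    have rr: "- int (2*q) * v^2 + int (r*s) * (2 * u)^2 = 2 * ((2 * int r * int s) * u^2 - (int q) * v^2)" by (simp add: algebra_simps power2_eq_square)
    have nm: "2 = - int (2*q) * v^2 + int (r*s) * (2 * u)^2" unfolding rr e10 by simp
    show ?thesis
      unfolding Let_def
      apply (intro conjI)
      subgoal using nA fB by blast
      apply (rule exI[of _ "v"], rule exI[of _ "2 * u"])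
      using nA fB sq nm by simp
    next
    assume h: "d1 = 2 * int q"
    have hd2: "d2 = int r * int s"
    proof -
      have "(2 * int q) * d2 = (2 * int q) * (int r * int s)" using dd(5) h by (simp add: ac_simps)
      then show ?thesis using nz by simp
    qed
    have False by (rule excl_d1[where p=q and c=1, OF _ dd(10) _ pq q2]) (simp_all add: h hd2 Lsimps ee dvd_mult dvd_mult2)
    then show ?thesis ..
    next
    assume h: "d1 = 2 * int q * int s"
    have hd2: "d2 = int r"
    proof -
      have "(2 * int q * int s) * d2 = (2 * int q * int s) * (int r)" using dd(5) h by (simp add: ac_simps)
      then show ?thesis using nz by simp
    qed
    have False by (rule excl_d1[where p=q and c=1, OF _ dd(10) _ pq q2]) (simp_all add: h hd2 Lsimps ee dvd_mult dvd_mult2)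
    then show ?thesis ..
    next
    assume h: "d1 = 2 * int q * int r"
    have hd2: "d2 = int s"
    proof -
      have "(2 * int q * int r) * d2 = (2 * int q * int r) * (int s)" using dd(5) h by (simp add: ac_simps)
      then show ?thesis using nz by simp
    qed
    have False by (rule excl_d1[where p=q and c=1, OF _ dd(10) _ pq q2]) (simp_all add: h hd2 Lsimps ee dvd_mult dvd_mult2)
    then show ?thesis ..
    next
    assume h: "d1 = 2 * int q * int r * int s"
    have hd2: "d2 = 1"
    proof -
      have "(2 * int q * int r * int s) * d2 = (2 * int q * int r * int s) * (1)" using dd(5) h by (simp add: ac_simps)
      then show ?thesis using nz by simp
    qed
    have False by (rule excl_d1[where p=q and c=1, OF _ dd(10) _ pq q2]) (simp_all add: h hd2 Lsimps ee dvd_mult dvd_mult2)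
    then show ?thesis ..
    qed
  qed
qed

lemma (in qrs) P2_rho1:
  fixes g g' :: int and eps :: real
  assumes ee: "e = -1"
    and nrm: "g^2 - (int q * int r * int s) * g'^2 = 1" and gpos: "g > 0" and g'pos: "g' > 0"
    and minim: "\<forall>m n :: int. m > 0 \<longrightarrow> n > 0 \<longrightarrow> m^2 - (int q * int r * int s) * n^2 = 1 \<longrightarrow>
       of_int g + of_int g' * sqrt (real_of_int (int q * int r * int s)) \<le> of_int m + of_int n * sqrt (real_of_int (int q * int r * int s))"
    and eps: "eps = of_int g + of_int g' * sqrt (real (q*r*s))"
  shows "let A = is_nat_square (int q * (g + 1)); B = is_nat_square (int q * (g - 1)) in ((A \<and> \<not> B) \<or> (\<not> A \<and> B)) \<and> (\<exists>y1 y2 :: int. (A \<longrightarrow> sqrt (2 * eps) = of_int y1 * sqrt (real q) + of_int y2 * sqrt (real (r*s)) \<and> 2 = int q * y1^2 - int (r*s) * y2^2) \<and> (B \<longrightarrow> sqrt (2 * eps) = of_int y1 * sqrt (real q) + of_int y2 * sqrt (real (r*s)) \<and> 2 = - int q * y1^2 + int (r*s) * y2^2))"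
proof -
  have Dpos: "int q * int r * int s > 0" using nz q2 r2 s2 by simp
  have oddD: "odd (int q * int r * int s)" using odd_prod3[OF pq pr ps q2 r2 s2] .
  have u4: "(int q * int r * int s) mod 4 \<noteq> 0"
  proof
    assume "(int q * int r * int s) mod 4 = 0"
    then have "4 dvd int q * int r * int s" by (simp add: dvd_eq_mod_eq_0)
    then have "4 dvd int q * int r * int s" .
    then have "2 dvd int q * int r * int s" by (rule dvd_trans[rotated]) simp
    then show False using oddD by simp
  qed
  consider (ev) "even g" | (od) "odd g" by blast
  then show ?thesis
  proof cases
    case ev
    obtain d1 d2 u v where dd: "d1 > 0" "d2 > 0" "u > 0" "v > 0" "d1 * d2 = int q * int r * int s"
      "g = d1 * u^2 - 1" "g = d2 * v^2 + 1" "g' = u * v"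
      "2 * g = d1 * u^2 + d2 * v^2" "d1 * u^2 - d2 * v^2 = 2"
      by (rule even_decomp2[OF nrm gpos g'pos ev Dpos])
    have dvd: "d1 dvd int q * int r * int s" using dd(5) by (metis dvd_triv_left)
    from div3[OF ipq ipr ips dvd dd(1)] show ?thesis
    proof (elim disjE)
    assume h: "d1 = 1"
    have hd2: "d2 = int q * int r * int s"
    proof -
      have "(1) * d2 = (1) * (int q * int r * int s)" using dd(5) h by (simp add: ac_simps)
      then show ?thesis using nz by simp
    qed
    have False by (rule excl_d2[where p=r and c=2, OF _ dd(10)]) (simp_all add: h hd2 Lsimps ee dvd_mult dvd_mult2)
    then show ?thesis ..
    next
    assume h: "d1 = int s"
    have hd2: "d2 = int q * int r"
    proof -
      have "(int s) * d2 = (int s) * (int q * int r)" using dd(5) h by (simp add: ac_simps)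
      then show ?thesis using nz by simp
    qed
    have False by (rule excl_d2[where p=r and c=2, OF _ dd(10)]) (simp_all add: h hd2 Lsimps ee dvd_mult dvd_mult2)
    then show ?thesis ..
    next
    assume h: "d1 = int r"
    have hd2: "d2 = int q * int s"
    proof -
      have "(int r) * d2 = (int r) * (int q * int s)" using dd(5) h by (simp add: ac_simps)
      then show ?thesis using nz by simp
    qed
    have False by (rule excl_d2[where p=s and c=2, OF _ dd(10)]) (simp_all add: h hd2 Lsimps ee dvd_mult dvd_mult2)
    then show ?thesis ..
    next
    assume h: "d1 = int r * int s"
    have hd2: "d2 = int q"
    proof -
      have "(int r * int s) * d2 = (int r * int s) * (int q)" using dd(5) h by (simp add: ac_simps)
      then show ?thesis using nz by simp
    qed
    have nA: "\<not> is_nat_square (int q * (g + 1))"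
    proof -
      have eq: "int q * (g + 1) = int q * (int r * int s) * (u)^2" using h hd2 dd(6) by (simp add: algebra_simps power2_eq_square)
      have "\<not> is_nat_square (int q * (int r * int s) * (u)^2)"
        by (rule nat_sq_no[OF ipq]) (use ndvd nz dd(3) dd(4) ipq ipr ips in \<open>simp_all add: prime_dvd_mult_iff\<close>)
      then show ?thesis unfolding eq .
    qed
    have fB: "is_nat_square (int q * (g - 1))"
    proof -
      have "int q * (g - 1) = (int q * v)^2" using h hd2 dd(7) by (simp add: algebra_simps power2_eq_square)
      then show ?thesis by (simp only: nat_sq_yes)
    qed
    have sq: "sqrt (real 2 * eps) = of_int (v) * sqrt (real (q)) + of_int (u) * sqrt (real (r*s))"
    proof (rule sqrt_rep[where Dn="q*r*s"])
      show "(v) \<ge> 0" using dd(3) dd(4) by simp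
      show "(u) \<ge> 0" using dd(3) dd(4) by simp
      show "(q) * (r*s) = q*r*s" by (simp add: ac_simps)
      show "int 2 * g = (v)^2 * int (q) + (u)^2 * int (r*s)" using h hd2 dd(9) by (simp add: algebra_simps power2_eq_square)
      show "int 2 * g' = 2 * (v) * (u)" using dd(8) by (simp add: algebra_simps)
      show "eps = of_int g + of_int g' * sqrt (real (q*r*s))" by (rule eps)
    qed
    have e10: "(int r * int s) * u^2 - (int q) * v^2 = 2" using h hd2 dd(10) by simp
    have rr: "- int q * v^2 + int (r*s) * u^2 = 1 * ((int r * int s) * u^2 - (int q) * v^2)" by (simp add: algebra_simps power2_eq_square)
    have nm: "2 = - int q * v^2 + int (r*s) * u^2" unfolding rr e10 by simp
    show ?thesis
      unfolding Let_def
      apply (intro conjI)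
      subgoal using nA fB by blast
      apply (rule exI[of _ "v"], rule exI[of _ "u"])
      using nA fB sq nm by simp
    next
    assume h: "d1 = int q"
    have hd2: "d2 = int r * int s"
    proof -
      have "(int q) * d2 = (int q) * (int r * int s)" using dd(5) h by (simp add: ac_simps)
      then show ?thesis using nz by simp
    qed
    have fA: "is_nat_square (int q * (g + 1))"
    proof -
      have "int q * (g + 1) = (int q * u)^2" using h hd2 dd(6) by (simp add: algebra_simps power2_eq_square)
      then show ?thesis by (simp only: nat_sq_yes)
    qed
    have nB: "\<not> is_nat_square (int q * (g - 1))"
    proof -
      have eq: "int q * (g - 1) = int q * (int r * int s) * (v)^2" using h hd2 dd(7) by (simp add: algebra_simps power2_eq_square)
      have "\<not> is_nat_square (int q * (int r * int s) * (v)^2)"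
        by (rule nat_sq_no[OF ipq]) (use ndvd nz dd(3) dd(4) ipq ipr ips in \<open>simp_all add: prime_dvd_mult_iff\<close>)
      then show ?thesis unfolding eq .
    qed
    have sq: "sqrt (real 2 * eps) = of_int (u) * sqrt (real (q)) + of_int (v) * sqrt (real (r*s))"
    proof (rule sqrt_rep[where Dn="q*r*s"])
      show "(u) \<ge> 0" using dd(3) dd(4) by simp
      show "(v) \<ge> 0" using dd(3) dd(4) by simp
      show "(q) * (r*s) = q*r*s" by (simp add: ac_simps)
      show "int 2 * g = (u)^2 * int (q) + (v)^2 * int (r*s)" using h hd2 dd(9) by (simp add: algebra_simps power2_eq_square)
      show "int 2 * g' = 2 * (u) * (v)" using dd(8) by (simp add: algebra_simps)
      show "eps = of_int g + of_int g' * sqrt (real (q*r*s))" by (rule eps)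
    qed
    have e10: "(int q) * u^2 - (int r * int s) * v^2 = 2" using h hd2 dd(10) by simp
    have rr: "int q * u^2 - int (r*s) * v^2 = 1 * ((int q) * u^2 - (int r * int s) * v^2)" by (simp add: algebra_simps power2_eq_square)
    have nm: "2 = int q * u^2 - int (r*s) * v^2" unfolding rr e10 by simp
    show ?thesis
      unfolding Let_def
      apply (intro conjI)
      subgoal using fA nB by blast
      apply (rule exI[of _ "u"], rule exI[of _ "v"])
      using fA nB sq nm by simp
    next
    assume h: "d1 = int q * int s"
    have hd2: "d2 = int r"
    proof -
      have "(int q * int s) * d2 = (int q * int s) * (int r)" using dd(5) h by (simp add: ac_simps)
      then show ?thesis using nz by simp
    qed
    have False by (rule excl_d1[where p=s and c=2, OF _ dd(10) _ ps s2]) (simp_all add: h hd2 Lsimps ee dvd_mult dvd_mult2)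
    then show ?thesis ..
    next
    assume h: "d1 = int q * int r"
    have hd2: "d2 = int s"
    proof -
      have "(int q * int r) * d2 = (int q * int r) * (int s)" using dd(5) h by (simp add: ac_simps)
      then show ?thesis using nz by simp
    qed
    have False by (rule excl_d1[where p=r and c=2, OF _ dd(10) _ pr r2]) (simp_all add: h hd2 Lsimps ee dvd_mult dvd_mult2)
    then show ?thesis ..
    next
    assume h: "d1 = int q * int r * int s"
    have hd2: "d2 = 1"
    proof -
      have "(int q * int r * int s) * d2 = (int q * int r * int s) * (1)" using dd(5) h by (simp add: ac_simps)
      then show ?thesis using nz by simp
    qed
    have False by (rule excl_d1[where p=r and c=2, OF _ dd(10) _ pr r2]) (simp_all add: h hd2 Lsimps ee dvd_mult dvd_mult2)
    then show ?thesis ..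
    qed
  next
    case od
    obtain d1 d2 u v where dd: "d1 > 0" "d2 > 0" "u > 0" "v > 0" "d1 * d2 = int q * int r * int s"
      "g = 2 * d1 * u^2 - 1" "g = 2 * d2 * v^2 + 1" "g' = 2 * u * v"
      "g = d1 * u^2 + d2 * v^2" "d1 * u^2 - d2 * v^2 = 1"
      by (rule odd_decomp2[OF nrm gpos g'pos od Dpos u4])
    have dvd: "d1 dvd int q * int r * int s" using dd(5) by (metis dvd_triv_left)
    from div3[OF ipq ipr ips dvd dd(1)] show ?thesis
    proof (elim disjE)
    assume h: "d1 = 1"
    have hd2: "d2 = int q * int r * int s"
    proof -
      have "(1) * d2 = (1) * (int q * int r * int s)" using dd(5) h by (simp add: ac_simps)
      then show ?thesis using nz by simp
    qed
    have False
    proof (rule min_contra[where D="int q * int r * int s" and u=u and v=v and g=g and g'=g', OF Dpos dd(3) dd(4) _ _ _ minim])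
      show "u^2 - (int q * int r * int s) * v^2 = 1" using h hd2 dd(10) by simp
      show "g = u^2 + (int q * int r * int s) * v^2" using h hd2 dd(9) by simp
      show "g' = 2 * u * v" by (rule dd(8))
    qed
    then show ?thesis ..
    next
    assume h: "d1 = int s"
    have hd2: "d2 = int q * int r"
    proof -
      have "(int s) * d2 = (int s) * (int q * int r)" using dd(5) h by (simp add: ac_simps)
      then show ?thesis using nz by simp
    qed
    have False by (rule excl_d2[where p=q and c=1, OF _ dd(10)]) (simp_all add: h hd2 Lsimps ee dvd_mult dvd_mult2)
    then show ?thesis ..
    next
    assume h: "d1 = int r"
    have hd2: "d2 = int q * int s"
    proof -
      have "(int r) * d2 = (int r) * (int q * int s)" using dd(5) h by (simp add: ac_simps)
      then show ?thesis using nz by simp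
    qed
    have False by (rule excl_d2[where p=q and c=1, OF _ dd(10)]) (simp_all add: h hd2 Lsimps ee dvd_mult dvd_mult2)
    then show ?thesis ..
    next
    assume h: "d1 = int r * int s"
    have hd2: "d2 = int q"
    proof -
      have "(int r * int s) * d2 = (int r * int s) * (int q)" using dd(5) h by (simp add: ac_simps)
      then show ?thesis using nz by simp
    qed
    have False by (rule excl_d1[where p=r and c=1, OF _ dd(10) _ pr r2]) (simp_all add: h hd2 Lsimps ee dvd_mult dvd_mult2)
    then show ?thesis ..
    next
    assume h: "d1 = int q"
    have hd2: "d2 = int r * int s"
    proof -
      have "(int q) * d2 = (int q) * (int r * int s)" using dd(5) h by (simp add: ac_simps)
      then show ?thesis using nz by simp
    qed
    have False by (rule excl_d1[where p=q and c=1, OF _ dd(10) _ pq q2]) (simp_all add: h hd2 Lsimps ee dvd_mult dvd_mult2)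
    then show ?thesis ..
    next
    assume h: "d1 = int q * int s"
    have hd2: "d2 = int r"
    proof -
      have "(int q * int s) * d2 = (int q * int s) * (int r)" using dd(5) h by (simp add: ac_simps)
      then show ?thesis using nz by simp
    qed
    have False by (rule excl_d2[where p=r and c=1, OF _ dd(10)]) (simp_all add: h hd2 Lsimps ee dvd_mult dvd_mult2)
    then show ?thesis ..
    next
    assume h: "d1 = int q * int r"
    have hd2: "d2 = int s"
    proof -
      have "(int q * int r) * d2 = (int q * int r) * (int s)" using dd(5) h by (simp add: ac_simps)
      then show ?thesis using nz by simp
    qed
    have False by (rule excl_d2[where p=s and c=1, OF _ dd(10)]) (simp_all add: h hd2 Lsimps ee dvd_mult dvd_mult2)
    then show ?thesis ..
    next
    assume h: "d1 = int q * int r * int s"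
    have hd2: "d2 = 1"
    proof -
      have "(int q * int r * int s) * d2 = (int q * int r * int s) * (1)" using dd(5) h by (simp add: ac_simps)
      then show ?thesis using nz by simp
    qed
    have False by (rule excl_d1[where p=q and c=1, OF _ dd(10) _ pq q2]) (simp_all add: h hd2 Lsimps ee dvd_mult dvd_mult2)
    then show ?thesis ..
    qed
  qed
qed


lemma (in qrs) setup1: "qsetup (int q * int r * int s)"
proof
  show "int q * int r * int s > 1"
  proof -
    have "int q * int r \<ge> 1 * 1" using q2 r2 by (intro mult_mono) auto
    then have "int q * int r * int s \<ge> 1 * 3" using s2 by (intro mult_mono) auto
    then show ?thesis by simp
  qed
  have c: "[int q * int r * int s = 3 * 1 * 1] (mod 4)"
  proof -
    have m: "int q mod 4 = 3" "int r mod 4 = 1" "int s mod 4 = 1" using q4 r4 s4 by presburger+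
    show ?thesis by (intro cong_mult) (use m in \<open>simp_all add: Cong.cong_def\<close>)
  qed
  then show "(int q * int r * int s) mod 4 \<noteq> 1" by (simp add: Cong.cong_def)
  fix h k :: int assume "k \<noteq> 0"
  then show "int q * int r * int s * k^2 \<noteq> h^2"
  proof -
    have nd: "\<not> int q dvd int r * int s" using ndvd by (simp add: prime_dvd_mult_iff[OF ipq])
    show ?thesis using not_sq[OF ipq nd \<open>k \<noteq> 0\<close>, of h] by (simp add: ac_simps)
  qed
next
  fix a b :: int
  show "a^2 - int q * int r * int s * b^2 \<noteq> -1"
  proof
    assume "a^2 - int q * int r * int s * b^2 = -1"
    then have "a^2 - (-1) = int q * (int r * int s * b^2)" by (simp add: algebra_simps)
    then have "[a^2 = -1] (mod int q)" by (simp add: cong_iff_dvd_diff)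
    then have "Legendre (-1) (int q) \<noteq> -1" by (rule Legendre_sq_not)
    then show False using Lm1q by simp
  qed
qed

lemma (in qrs) setup2: "qsetup (2 * int q * int r * int s)"
proof
  show "2 * int q * int r * int s > 1"
  proof -
    have "int q * int r \<ge> 1 * 1" using q2 r2 by (intro mult_mono) auto
    then have "int q * int r * int s \<ge> 1 * 3" using s2 by (intro mult_mono) auto
    then show ?thesis by simp
  qed
  show "(2 * int q * int r * int s) mod 4 \<noteq> 1"
  proof
    assume "(2 * int q * int r * int s) mod 4 = 1"
    then have "odd (2 * int q * int r * int s)" by (metis dvd_mod_iff even_numeral odd_one dvd_trans[of 2 4] dvd_refl
        numeral_Bit0 mult_2 dvd_add)
    then show False by simp
  qed
  fix h k :: int assume "k \<noteq> 0"
  then show "2 * int q * int r * int s * k^2 \<noteq> h^2"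
  proof -
    have nd: "\<not> int q dvd 2 * int r * int s" using ndvd by (simp add: prime_dvd_mult_iff[OF ipq])
    show ?thesis using not_sq[OF ipq nd \<open>k \<noteq> 0\<close>, of h] by (simp add: ac_simps)
  qed
next
  fix a b :: int
  show "a^2 - 2 * int q * int r * int s * b^2 \<noteq> -1"
  proof
    assume "a^2 - 2 * int q * int r * int s * b^2 = -1"
    then have "a^2 - (-1) = int q * (2 * int r * int s * b^2)" by (simp add: algebra_simps)
    then have "[a^2 = -1] (mod int q)" by (simp add: cong_iff_dvd_diff)
    then have "Legendre (-1) (int q) \<noteq> -1" by (rule Legendre_sq_not)
    then show False using Lm1q by simp
  qed
qed


theorem mainTheorem1:
  fixes \<eta> \<rho> q r s :: nat
  assumes "\<eta> \<in> {1, 2}" and "\<rho> \<in> {1, 2}" and "\<eta> \<noteq> \<rho>"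
    and "prime q" and "prime r" and "prime s"
    and "q mod 4 = 3" and "r mod 8 = 5" and "s mod 8 = 5"
    and "Legendre (int q) (int r) = (-1) ^ kdelta \<eta> 2"
    and "Legendre (int q) (int s) = (-1) ^ kdelta \<eta> 2"
    and "Legendre (int r) (int s) = 1"
  shows
   "(\<forall>\<gamma> \<gamma>' :: int.
       fund_unit (int (\<eta>*q*r*s)) = of_int \<gamma> + of_int \<gamma>' * sqrt (real (\<eta>*q*r*s)) \<longrightarrow>
       (let A = is_nat_square (2 ^ kdelta \<eta> 1 * int q * (\<gamma> - 1));
            B = is_nat_square (2 * int r * (\<gamma> + (-1) ^ kdelta \<eta> 2));
            C = is_nat_square (2 * int s * (\<gamma> + (-1) ^ kdelta \<eta> 2));
            \<epsilon> = fund_unit (int (\<eta>*q*r*s))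
        in ((A \<and> \<not> B \<and> \<not> C) \<or> (\<not> A \<and> B \<and> \<not> C) \<or> (\<not> A \<and> \<not> B \<and> C)) \<and>
           (\<exists>\<gamma>1 \<gamma>2 :: int.
              (A \<longrightarrow> sqrt (real \<eta> * \<epsilon>) = of_int \<gamma>1 * sqrt (real q) + of_int \<gamma>2 * sqrt (real (\<eta>*r*s))
                     \<and> int \<eta> = - int q * \<gamma>1^2 + int (\<eta>*r*s) * \<gamma>2^2) \<and>
              (B \<longrightarrow> sqrt (real \<eta> * \<epsilon>) = of_int \<gamma>1 * sqrt (real (\<eta>*r)) + of_int \<gamma>2 * sqrt (real (q*s))
                     \<and> int \<eta> = (-1) ^ kdelta \<eta> 2 * int (\<eta>*r) * \<gamma>1^2 + (-1) ^ kdelta \<eta> 1 * int (q*s) * \<gamma>2^2) \<and>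
              (C \<longrightarrow> sqrt (real \<eta> * \<epsilon>) = of_int \<gamma>1 * sqrt (real (\<eta>*s)) + of_int \<gamma>2 * sqrt (real (q*r))
                     \<and> int \<eta> = (-1) ^ kdelta \<eta> 2 * int (\<eta>*s) * \<gamma>1^2 + (-1) ^ kdelta \<eta> 1 * int (q*r) * \<gamma>2^2)))) \<and>
    (\<forall>x y :: int.
       fund_unit (int (\<rho>*q*r*s)) = of_int x + of_int y * sqrt (real (\<rho>*q*r*s)) \<longrightarrow>
       (let A = is_nat_square (2 ^ kdelta \<rho> 2 * int q * (x + 1));
            B = is_nat_square (2 ^ kdelta \<rho> 2 * int q * (x - 1));
            \<epsilon> = fund_unit (int (\<rho>*q*r*s))
        in ((A \<and> \<not> B) \<or> (\<not> A \<and> B)) \<and>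
           (\<exists>y1 y2 :: int.
              (A \<longrightarrow> sqrt (2 * \<epsilon>) = of_int y1 * sqrt (real (\<rho>*q)) + of_int y2 * sqrt (real (r*s))
                     \<and> 2 = int (\<rho>*q) * y1^2 - int (r*s) * y2^2) \<and>
              (B \<longrightarrow> sqrt (2 * \<epsilon>) = of_int y1 * sqrt (real (\<rho>*q)) + of_int y2 * sqrt (real (r*s))
                     \<and> 2 = - int (\<rho>*q) * y1^2 + int (r*s) * y2^2))))"
proof -
  have eta: "(\<eta> = 1 \<and> \<rho> = 2) \<or> (\<eta> = 2 \<and> \<rho> = 1)" using assms(1,2,3) by auto
  define e where "e = ((-1::int) ^ kdelta \<eta> 2)"
  have e: "e = 1 \<or> e = -1" unfolding e_def kdelta_def by simp
  interpret qrs q r s e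
    by (unfold_locales) (use assms e in \<open>simp_all add: e_def\<close>)
  have F1: "\<exists>a b :: int. fund_unit (int q * int r * int s) = of_int a + of_int b * sqrt (real_of_int (int q * int r * int s)) \<and> a > 0 \<and> b > 0 \<and> a^2 - (int q * int r * int s)*b^2 = 1
     \<and> (\<forall>m n :: int. m > 0 \<longrightarrow> n > 0 \<longrightarrow> m^2 - (int q * int r * int s)*n^2 = 1 \<longrightarrow> fund_unit (int q * int r * int s) \<le> of_int m + of_int n * sqrt (real_of_int (int q * int r * int s)))"
    by (rule qsetup.fund_props[OF setup1])
  have F2: "\<exists>a b :: int. fund_unit (2 * int q * int r * int s) = of_int a + of_int b * sqrt (real_of_int (2 * int q * int r * int s)) \<and> a > 0 \<and> b > 0 \<and> a^2 - (2 * int q * int r * int s)*b^2 = 1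
     \<and> (\<forall>m n :: int. m > 0 \<longrightarrow> n > 0 \<longrightarrow> m^2 - (2 * int q * int r * int s)*n^2 = 1 \<longrightarrow> fund_unit (2 * int q * int r * int s) \<le> of_int m + of_int n * sqrt (real_of_int (2 * int q * int r * int s)))"
    by (rule qsetup.fund_props[OF setup2])
  have CU1: "\<And>a b a' b'. of_int a + of_int b * sqrt (real_of_int (int q * int r * int s)) = of_int a' + of_int b' * sqrt (real_of_int (int q * int r * int s)) \<Longrightarrow> a = a' \<and> b = b'"
    by (rule qsetup.coord_unique[OF setup1])
  have CU2: "\<And>a b a' b'. of_int a + of_int b * sqrt (real_of_int (2 * int q * int r * int s)) = of_int a' + of_int b' * sqrt (real_of_int (2 * int q * int r * int s)) \<Longrightarrow> a = a' \<and> b = b'"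
    by (rule qsetup.coord_unique[OF setup2])
  have P1: "(\<forall>\<gamma> \<gamma>' :: int.
       fund_unit (int (\<eta>*q*r*s)) = of_int \<gamma> + of_int \<gamma>' * sqrt (real (\<eta>*q*r*s)) \<longrightarrow>
       (let A = is_nat_square (2 ^ kdelta \<eta> 1 * int q * (\<gamma> - 1));
            B = is_nat_square (2 * int r * (\<gamma> + (-1) ^ kdelta \<eta> 2));
            C = is_nat_square (2 * int s * (\<gamma> + (-1) ^ kdelta \<eta> 2));
            \<epsilon> = fund_unit (int (\<eta>*q*r*s))
        in ((A \<and> \<not> B \<and> \<not> C) \<or> (\<not> A \<and> B \<and> \<not> C) \<or> (\<not> A \<and> \<not> B \<and> C)) \<and>
           (\<exists>\<gamma>1 \<gamma>2 :: int.
              (A \<longrightarrow> sqrt (real \<eta> * \<epsilon>) = of_int \<gamma>1 * sqrt (real q) + of_int \<gamma>2 * sqrt (real (\<eta>*r*s))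
                     \<and> int \<eta> = - int q * \<gamma>1^2 + int (\<eta>*r*s) * \<gamma>2^2) \<and>
              (B \<longrightarrow> sqrt (real \<eta> * \<epsilon>) = of_int \<gamma>1 * sqrt (real (\<eta>*r)) + of_int \<gamma>2 * sqrt (real (q*s))
                     \<and> int \<eta> = (-1) ^ kdelta \<eta> 2 * int (\<eta>*r) * \<gamma>1^2 + (-1) ^ kdelta \<eta> 1 * int (q*s) * \<gamma>2^2) \<and>
              (C \<longrightarrow> sqrt (real \<eta> * \<epsilon>) = of_int \<gamma>1 * sqrt (real (\<eta>*s)) + of_int \<gamma>2 * sqrt (real (q*r))
                     \<and> int \<eta> = (-1) ^ kdelta \<eta> 2 * int (\<eta>*s) * \<gamma>1^2 + (-1) ^ kdelta \<eta> 1 * int (q*r) * \<gamma>2^2))))"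
  proof (cases "\<eta> = 1")
    case True
    then have hX: "\<eta> = 1" .
    have ee: "e = 1" using hX by (simp add: e_def kdelta_def)
    show ?thesis
    proof (intro allI impI)
      fix \<gamma> \<gamma>' :: int
      assume H: "fund_unit (int (\<eta>*q*r*s)) = of_int \<gamma> + of_int \<gamma>' * sqrt (real (\<eta>*q*r*s))"
      obtain a b where ab: "fund_unit (int q * int r * int s) = of_int a + of_int b * sqrt (real_of_int (int q * int r * int s))" "a > 0" "b > 0" "a^2 - (int q * int r * int s)*b^2 = 1"
        "\<forall>m n :: int. m > 0 \<longrightarrow> n > 0 \<longrightarrow> m^2 - (int q * int r * int s)*n^2 = 1 \<longrightarrow> fund_unit (int q * int r * int s) \<le> of_int m + of_int n * sqrt (real_of_int (int q * int r * int s))"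
        using F1 by blast
      have Deq: "int (\<eta>*q*r*s) = int q * int r * int s" using hX by simp
      have Req: "real (\<eta>*q*r*s) = real_of_int (int q * int r * int s)" using hX by simp
      have H': "fund_unit (int q * int r * int s) = of_int \<gamma> + of_int \<gamma>' * sqrt (real_of_int (int q * int r * int s))"
        using H unfolding Deq Req .
      have "of_int a + of_int b * sqrt (real_of_int (int q * int r * int s)) = of_int \<gamma> + of_int \<gamma>' * sqrt (real_of_int (int q * int r * int s))"
        using H' ab(1) by simp
      then have ga: "a = \<gamma>" "b = \<gamma>'" using CU1 by blast+
      have core: "let A = is_nat_square (2 * int q * (\<gamma> - 1)); B = is_nat_square (2 * int r * (\<gamma> + 1)); C = is_nat_square (2 * int s * (\<gamma> + 1)) in ((A \<and> \<not> B \<and> \<not> C) \<or> (\<not> A \<and> B \<and> \<not> C) \<or> (\<not> A \<and> \<not> B \<and> C)) \<and> (\<exists>\<gamma>1 \<gamma>2 :: int. (A \<longrightarrow> sqrt (fund_unit (int (\<eta>*q*r*s))) = of_int \<gamma>1 * sqrt (real q) + of_int \<gamma>2 * sqrt (real (r*s)) \<and> 1 = - int q * \<gamma>1^2 + int (r*s) * \<gamma>2^2) \<and> (B \<longrightarrow> sqrt (fund_unit (int (\<eta>*q*r*s))) = of_int \<gamma>1 * sqrt (real r) + of_int \<gamma>2 * sqrt (real (q*s)) \<and> 1 = int r * \<gamma>1^2 - int (q*s) * \<gamma>2^2) \<and> (C \<longrightarrow> sqrt (fund_unit (int (\<eta>*q*r*s))) = of_int \<gamma>1 * sqrt (real s)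 + of_int \<gamma>2 * sqrt (real (q*r)) \<and> 1 = int s * \<gamma>1^2 - int (q*r) * \<gamma>2^2))"
      proof (rule P1_eta1[OF ee])
        show "\<gamma>^2 - (int q * int r * int s) * \<gamma>'^2 = 1" using ab(4) ga by simp
        show "\<gamma> > 0" "\<gamma>' > 0" using ab(2,3) ga by simp_all
        show "\<forall>m n :: int. m > 0 \<longrightarrow> n > 0 \<longrightarrow> m^2 - (int q * int r * int s) * n^2 = 1 \<longrightarrow>
          of_int \<gamma> + of_int \<gamma>' * sqrt (real_of_int (int q * int r * int s)) \<le> of_int m + of_int n * sqrt (real_of_int (int q * int r * int s))"
          using ab(5) H' by simp
        show "fund_unit (int (\<eta>*q*r*s)) = of_int \<gamma> + of_int \<gamma>' * sqrt (real (q*r*s))" using H hX by simp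
      qed
      show "(let A = is_nat_square (2 ^ kdelta \<eta> 1 * int q * (\<gamma> - 1));
            B = is_nat_square (2 * int r * (\<gamma> + (-1) ^ kdelta \<eta> 2));
            C = is_nat_square (2 * int s * (\<gamma> + (-1) ^ kdelta \<eta> 2));
            \<epsilon> = fund_unit (int (\<eta>*q*r*s))
        in ((A \<and> \<not> B \<and> \<not> C) \<or> (\<not> A \<and> B \<and> \<not> C) \<or> (\<not> A \<and> \<not> B \<and> C)) \<and>
           (\<exists>\<gamma>1 \<gamma>2 :: int.
              (A \<longrightarrow> sqrt (real \<eta> * \<epsilon>) = of_int \<gamma>1 * sqrt (real q) + of_int \<gamma>2 * sqrt (real (\<eta>*r*s))
                     \<and> int \<eta> = - int q * \<gamma>1^2 + int (\<eta>*r*s) * \<gamma>2^2) \<and>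
              (B \<longrightarrow> sqrt (real \<eta> * \<epsilon>) = of_int \<gamma>1 * sqrt (real (\<eta>*r)) + of_int \<gamma>2 * sqrt (real (q*s))
                     \<and> int \<eta> = (-1) ^ kdelta \<eta> 2 * int (\<eta>*r) * \<gamma>1^2 + (-1) ^ kdelta \<eta> 1 * int (q*s) * \<gamma>2^2) \<and>
              (C \<longrightarrow> sqrt (real \<eta> * \<epsilon>) = of_int \<gamma>1 * sqrt (real (\<eta>*s)) + of_int \<gamma>2 * sqrt (real (q*r))
                     \<and> int \<eta> = (-1) ^ kdelta \<eta> 2 * int (\<eta>*s) * \<gamma>1^2 + (-1) ^ kdelta \<eta> 1 * int (q*r) * \<gamma>2^2)))"
        using core hX by (simp add: Let_def kdelta_def)
    qed
  next
    case False
    then have hX: "\<eta> = 2" using eta by auto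
    have ee: "e = -1" using hX by (simp add: e_def kdelta_def)
    show ?thesis
    proof (intro allI impI)
      fix \<gamma> \<gamma>' :: int
      assume H: "fund_unit (int (\<eta>*q*r*s)) = of_int \<gamma> + of_int \<gamma>' * sqrt (real (\<eta>*q*r*s))"
      obtain a b where ab: "fund_unit (2 * int q * int r * int s) = of_int a + of_int b * sqrt (real_of_int (2 * int q * int r * int s))" "a > 0" "b > 0" "a^2 - (2 * int q * int r * int s)*b^2 = 1"
        "\<forall>m n :: int. m > 0 \<longrightarrow> n > 0 \<longrightarrow> m^2 - (2 * int q * int r * int s)*n^2 = 1 \<longrightarrow> fund_unit (2 * int q * int r * int s) \<le> of_int m + of_int n * sqrt (real_of_int (2 * int q * int r * int s))"
        using F2 by blast
      have Deq: "int (\<eta>*q*r*s) = 2 * int q * int r * int s" using hX by simp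
      have Req: "real (\<eta>*q*r*s) = real_of_int (2 * int q * int r * int s)" using hX by simp
      have H': "fund_unit (2 * int q * int r * int s) = of_int \<gamma> + of_int \<gamma>' * sqrt (real_of_int (2 * int q * int r * int s))"
        using H unfolding Deq Req .
      have "of_int a + of_int b * sqrt (real_of_int (2 * int q * int r * int s)) = of_int \<gamma> + of_int \<gamma>' * sqrt (real_of_int (2 * int q * int r * int s))"
        using H' ab(1) by simp
      then have ga: "a = \<gamma>" "b = \<gamma>'" using CU2 by blast+
      have core: "let A = is_nat_square (int q * (\<gamma> - 1)); B = is_nat_square (2 * int r * (\<gamma> - 1)); C = is_nat_square (2 * int s * (\<gamma> - 1)) in ((A \<and> \<not> B \<and> \<not> C) \<or> (\<not> A \<and> B \<and> \<not> C) \<or> (\<not> A \<and> \<not> B \<and> C)) \<and> (\<exists>\<gamma>1 \<gamma>2 :: int. (A \<longrightarrow> sqrt (2 * fund_unit (int (\<eta>*q*r*s))) = of_int \<gamma>1 * sqrt (real q) + of_int \<gamma>2 * sqrt (real (2*r*s)) \<and> 2 = - int q * \<gamma>1^2 + int (2*r*s) * \<gamma>2^2) \<and> (B \<longrightarrow> sqrt (2 * fund_unit (int (\<eta>*q*r*s))) = of_int \<gamma>1 * sqrt (real (2*r)) + of_int \<gamma>2 * sqrt (real (q*s)) \<and> 2 = - int (2*r) * \<gamma>1^2 + int (q*s) * \<gamma>2^2) \<and> (C \<longrightarrow> sqrt (2 * fund_unit (int (\<eta>*q*r*s))) = of_int \<gamma>1 * sqrt (real (2*s)) + of_int \<gamma>2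 * sqrt (real (q*r)) \<and> 2 = - int (2*s) * \<gamma>1^2 + int (q*r) * \<gamma>2^2))"
      proof (rule P1_eta2[OF ee])
        show "\<gamma>^2 - (2 * int q * int r * int s) * \<gamma>'^2 = 1" using ab(4) ga by simp
        show "\<gamma> > 0" "\<gamma>' > 0" using ab(2,3) ga by simp_all
        show "\<forall>m n :: int. m > 0 \<longrightarrow> n > 0 \<longrightarrow> m^2 - (2 * int q * int r * int s) * n^2 = 1 \<longrightarrow>
          of_int \<gamma> + of_int \<gamma>' * sqrt (real_of_int (2 * int q * int r * int s)) \<le> of_int m + of_int n * sqrt (real_of_int (2 * int q * int r * int s))"
          using ab(5) H' by simp
        show "fund_unit (int (\<eta>*q*r*s)) = of_int \<gamma> + of_int \<gamma>' * sqrt (real (2*q*r*s))" using H hX by simp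
      qed
      show "(let A = is_nat_square (2 ^ kdelta \<eta> 1 * int q * (\<gamma> - 1));
            B = is_nat_square (2 * int r * (\<gamma> + (-1) ^ kdelta \<eta> 2));
            C = is_nat_square (2 * int s * (\<gamma> + (-1) ^ kdelta \<eta> 2));
            \<epsilon> = fund_unit (int (\<eta>*q*r*s))
        in ((A \<and> \<not> B \<and> \<not> C) \<or> (\<not> A \<and> B \<and> \<not> C) \<or> (\<not> A \<and> \<not> B \<and> C)) \<and>
           (\<exists>\<gamma>1 \<gamma>2 :: int.
              (A \<longrightarrow> sqrt (real \<eta> * \<epsilon>) = of_int \<gamma>1 * sqrt (real q) + of_int \<gamma>2 * sqrt (real (\<eta>*r*s))
                     \<and> int \<eta> = - int q * \<gamma>1^2 + int (\<eta>*r*s) * \<gamma>2^2) \<and>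
              (B \<longrightarrow> sqrt (real \<eta> * \<epsilon>) = of_int \<gamma>1 * sqrt (real (\<eta>*r)) + of_int \<gamma>2 * sqrt (real (q*s))
                     \<and> int \<eta> = (-1) ^ kdelta \<eta> 2 * int (\<eta>*r) * \<gamma>1^2 + (-1) ^ kdelta \<eta> 1 * int (q*s) * \<gamma>2^2) \<and>
              (C \<longrightarrow> sqrt (real \<eta> * \<epsilon>) = of_int \<gamma>1 * sqrt (real (\<eta>*s)) + of_int \<gamma>2 * sqrt (real (q*r))
                     \<and> int \<eta> = (-1) ^ kdelta \<eta> 2 * int (\<eta>*s) * \<gamma>1^2 + (-1) ^ kdelta \<eta> 1 * int (q*r) * \<gamma>2^2)))"
        using core hX by (simp add: Let_def kdelta_def)
    qed
  qed
  have P2: "(\<forall>x y :: int.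
       fund_unit (int (\<rho>*q*r*s)) = of_int x + of_int y * sqrt (real (\<rho>*q*r*s)) \<longrightarrow>
       (let A = is_nat_square (2 ^ kdelta \<rho> 2 * int q * (x + 1));
            B = is_nat_square (2 ^ kdelta \<rho> 2 * int q * (x - 1));
            \<epsilon> = fund_unit (int (\<rho>*q*r*s))
        in ((A \<and> \<not> B) \<or> (\<not> A \<and> B)) \<and>
           (\<exists>y1 y2 :: int.
              (A \<longrightarrow> sqrt (2 * \<epsilon>) = of_int y1 * sqrt (real (\<rho>*q)) + of_int y2 * sqrt (real (r*s))
                     \<and> 2 = int (\<rho>*q) * y1^2 - int (r*s) * y2^2) \<and>
              (B \<longrightarrow> sqrt (2 * \<epsilon>) = of_int y1 * sqrt (real (\<rho>*q)) + of_int y2 * sqrt (real (r*s))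
                     \<and> 2 = - int (\<rho>*q) * y1^2 + int (r*s) * y2^2))))"
  proof (cases "\<rho> = 2")
    case True
    then have hX: "\<rho> = 2" .
    have ee: "e = 1" using hX eta by (simp add: e_def kdelta_def)
    show ?thesis
    proof (intro allI impI)
      fix x y :: int
      assume H: "fund_unit (int (\<rho>*q*r*s)) = of_int x + of_int y * sqrt (real (\<rho>*q*r*s))"
      obtain a b where ab: "fund_unit (2 * int q * int r * int s) = of_int a + of_int b * sqrt (real_of_int (2 * int q * int r * int s))" "a > 0" "b > 0" "a^2 - (2 * int q * int r * int s)*b^2 = 1"
        "\<forall>m n :: int. m > 0 \<longrightarrow> n > 0 \<longrightarrow> m^2 - (2 * int q * int r * int s)*n^2 = 1 \<longrightarrow> fund_unit (2 * int q * int r * int s) \<le> of_int m + of_int n * sqrt (real_of_int (2 * int q * int r * int s))"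
        using F2 by blast
      have Deq: "int (\<rho>*q*r*s) = 2 * int q * int r * int s" using hX by simp
      have Req: "real (\<rho>*q*r*s) = real_of_int (2 * int q * int r * int s)" using hX by simp
      have H': "fund_unit (2 * int q * int r * int s) = of_int x + of_int y * sqrt (real_of_int (2 * int q * int r * int s))"
        using H unfolding Deq Req .
      have "of_int a + of_int b * sqrt (real_of_int (2 * int q * int r * int s)) = of_int x + of_int y * sqrt (real_of_int (2 * int q * int r * int s))"
        using H' ab(1) by simp
      then have ga: "a = x" "b = y" using CU2 by blast+
      have core: "let A = is_nat_square (2 * int q * (x + 1)); B = is_nat_square (2 * int q * (x - 1)) in ((A \<and> \<not> B) \<or> (\<not> A \<and> B)) \<and> (\<exists>y1 y2 :: int. (A \<longrightarrow> sqrt (2 * fund_unit (int (\<rho>*q*r*s))) = of_int y1 * sqrt (real (2*q)) + of_int y2 * sqrt (real (r*s)) \<and> 2 = int (2*q) * y1^2 - int (r*s) * y2^2) \<and> (B \<longrightarrow> sqrt (2 * fund_unit (int (\<rho>*q*r*s))) = of_int y1 * sqrt (real (2*q)) + of_int y2 * sqrt (real (r*s)) \<and> 2 = - int (2*q) * y1^2 + int (r*s) * y2^2))"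
      proof (rule P2_rho2[OF ee])
        show "x^2 - (2 * int q * int r * int s) * y^2 = 1" using ab(4) ga by simp
        show "x > 0" "y > 0" using ab(2,3) ga by simp_all
        show "\<forall>m n :: int. m > 0 \<longrightarrow> n > 0 \<longrightarrow> m^2 - (2 * int q * int r * int s) * n^2 = 1 \<longrightarrow>
          of_int x + of_int y * sqrt (real_of_int (2 * int q * int r * int s)) \<le> of_int m + of_int n * sqrt (real_of_int (2 * int q * int r * int s))"
          using ab(5) H' by simp
        show "fund_unit (int (\<rho>*q*r*s)) = of_int x + of_int y * sqrt (real (2*q*r*s))" using H hX by simp
      qed
      show "(let A = is_nat_square (2 ^ kdelta \<rho> 2 * int q * (x + 1));
            B = is_nat_square (2 ^ kdelta \<rho> 2 * int q * (x - 1));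
            \<epsilon> = fund_unit (int (\<rho>*q*r*s))
        in ((A \<and> \<not> B) \<or> (\<not> A \<and> B)) \<and>
           (\<exists>y1 y2 :: int.
              (A \<longrightarrow> sqrt (2 * \<epsilon>) = of_int y1 * sqrt (real (\<rho>*q)) + of_int y2 * sqrt (real (r*s))
                     \<and> 2 = int (\<rho>*q) * y1^2 - int (r*s) * y2^2) \<and>
              (B \<longrightarrow> sqrt (2 * \<epsilon>) = of_int y1 * sqrt (real (\<rho>*q)) + of_int y2 * sqrt (real (r*s))
                     \<and> 2 = - int (\<rho>*q) * y1^2 + int (r*s) * y2^2)))"
        using core hX by (simp add: Let_def kdelta_def)
    qed
  next
    case False
    then have hX: "\<rho> = 1" using eta by auto
    have ee: "e = -1" using hX eta by (simp add: e_def kdelta_def)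
    show ?thesis
    proof (intro allI impI)
      fix x y :: int
      assume H: "fund_unit (int (\<rho>*q*r*s)) = of_int x + of_int y * sqrt (real (\<rho>*q*r*s))"
      obtain a b where ab: "fund_unit (int q * int r * int s) = of_int a + of_int b * sqrt (real_of_int (int q * int r * int s))" "a > 0" "b > 0" "a^2 - (int q * int r * int s)*b^2 = 1"
        "\<forall>m n :: int. m > 0 \<longrightarrow> n > 0 \<longrightarrow> m^2 - (int q * int r * int s)*n^2 = 1 \<longrightarrow> fund_unit (int q * int r * int s) \<le> of_int m + of_int n * sqrt (real_of_int (int q * int r * int s))"
        using F1 by blast
      have Deq: "int (\<rho>*q*r*s) = int q * int r * int s" using hX by simp
      have Req: "real (\<rho>*q*r*s) = real_of_int (int q * int r * int s)" using hX by simp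
      have H': "fund_unit (int q * int r * int s) = of_int x + of_int y * sqrt (real_of_int (int q * int r * int s))"
        using H unfolding Deq Req .
      have "of_int a + of_int b * sqrt (real_of_int (int q * int r * int s)) = of_int x + of_int y * sqrt (real_of_int (int q * int r * int s))"
        using H' ab(1) by simp
      then have ga: "a = x" "b = y" using CU1 by blast+
      have core: "let A = is_nat_square (int q * (x + 1)); B = is_nat_square (int q * (x - 1)) in ((A \<and> \<not> B) \<or> (\<not> A \<and> B)) \<and> (\<exists>y1 y2 :: int. (A \<longrightarrow> sqrt (2 * fund_unit (int (\<rho>*q*r*s))) = of_int y1 * sqrt (real q) + of_int y2 * sqrt (real (r*s)) \<and> 2 = int q * y1^2 - int (r*s) * y2^2) \<and> (B \<longrightarrow> sqrt (2 * fund_unit (int (\<rho>*q*r*s))) = of_int y1 * sqrt (real q) + of_int y2 * sqrt (real (r*s)) \<and> 2 = - int q * y1^2 + int (r*s) * y2^2))"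
      proof (rule P2_rho1[OF ee])
        show "x^2 - (int q * int r * int s) * y^2 = 1" using ab(4) ga by simp
        show "x > 0" "y > 0" using ab(2,3) ga by simp_all
        show "\<forall>m n :: int. m > 0 \<longrightarrow> n > 0 \<longrightarrow> m^2 - (int q * int r * int s) * n^2 = 1 \<longrightarrow>
          of_int x + of_int y * sqrt (real_of_int (int q * int r * int s)) \<le> of_int m + of_int n * sqrt (real_of_int (int q * int r * int s))"
          using ab(5) H' by simp
        show "fund_unit (int (\<rho>*q*r*s)) = of_int x + of_int y * sqrt (real (q*r*s))" using H hX by simp
      qed
      show "(let A = is_nat_square (2 ^ kdelta \<rho> 2 * int q * (x + 1));
            B = is_nat_square (2 ^ kdelta \<rho> 2 * int q * (x - 1));
            \<epsilon> = fund_unit (int (\<rho>*q*r*s))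
        in ((A \<and> \<not> B) \<or> (\<not> A \<and> B)) \<and>
           (\<exists>y1 y2 :: int.
              (A \<longrightarrow> sqrt (2 * \<epsilon>) = of_int y1 * sqrt (real (\<rho>*q)) + of_int y2 * sqrt (real (r*s))
                     \<and> 2 = int (\<rho>*q) * y1^2 - int (r*s) * y2^2) \<and>
              (B \<longrightarrow> sqrt (2 * \<epsilon>) = of_int y1 * sqrt (real (\<rho>*q)) + of_int y2 * sqrt (real (r*s))
                     \<and> 2 = - int (\<rho>*q) * y1^2 + int (r*s) * y2^2)))"
        using core hX by (simp add: Let_def kdelta_def)
    qed
  qed
  show ?thesis using P1 P2 by blast
qed


end
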